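(* Let $A\in\mathbb{R}_+^{m\times m}$ and let $I=I_m$ be the identity matrix. Let $V_1,\dots,V_k$ be the vertex sets of the strongly connected components of the digraph $\vec G(A)$. Then: (1) $\rho(A,I)=\rho(A)$, and there exists $\mathbf{y}\in\mathbb{R}^m_+\setminus\{\mathbf{0}\}$ with $A\mathbf{y}=\rho(A)\mathbf{y}$. (2) There exists $\mathbf{x}=(x_1,\dots,x_m)^\top>\mathbf{0}$ with $\rho(A)=\max_{i\in[m]}\frac{(A\mathbf{x})_i}{x_i}$ if and only if the following holds: for every $j\in[k]$ with $\rho(A[V_j])=\rho(A)$, the vertex $\{V_j\}$ is a sink of the reduced digraph $\vec G(A)_{red}$. (3) If $A$ is irreducible, then a vector $\mathbf{x}$ with positive coordinates summing to $1$ satisfying the condition in (2) is unique. (4) $\hat\rho(A,I)=\min\{\rho(A[V_i]):\ \{V_i\}\text{ is a source of }\vec G(A)_{red}\}$, and there exists $\mathbf{w}\in\mathbb{R}^m_+\setminus\{\mathbf{0}\}$ with $A\mathbf{w}=\hat\rho(A,I)\mathbf{w}$.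
   Context: $[m]=\{1,\dots,m\}$. For $A,B\in\mathbb{R}_+^{m\times n}$ and $\mathbf{x}\in\mathbb{R}^n_+\setminus\{\mathbf{0}\}$, $r(A,B,\mathbf{x})=\max_{i\in[m]}\frac{(A\mathbf{x})_i}{(B\mathbf{x})_i}\in[0,\infty]$ with the conventions $\frac00=0$, $\frac c0=\infty$ for $c>0$; $\rho(A,B)=\inf\{r(A,B,\mathbf{x}):\mathbf{x}>\mathbf{0}\}$ and $\hat\rho(A,B)=\inf\{r(A,B,\mathbf{x}):\mathbf{x}\in\mathbb{R}^n_+\setminus\{\mathbf{0}\}\}$. $\rho(M)$ denotes the spectral radius of a square matrix $M$. For $A=[a_{ij}]\in\mathbb{R}_+^{m\times m}$, the digraph $\vec G(A)$ has vertex set $[m]$ and a directed edge $(i,j)$ iff $a_{ij}>0$. A strongly connected component is a maximal vertex set $W$ such that the induced subdigraph is strongly connected (any single vertex, with or without a loop, lies in one; a one-vertex digraph counts as strongly connected). $A$ is irreducible if $\vec G(A)$ is strongly connected. For $U\subseteq[m]$, $A[U]=[a_{ij}]_{i,j\in U}$ is the principal submatrix. The reduced digraph $\vec G(A)_{red}$ has vertices $\{V_1\},\dots,\{V_k\}$ (the strongly connected components) and an edge from $\{V_i\}$ to $\{V_j\}$, $i\ne j$, iff some edge of $\vec G(A)$ goes from a vertex of $V_i$ to a vertex of $V_j$. A vertex $\{V_p\}$ is a source if no edge of $\vec G(A)_{red}$ enters it, and a sink if no edge of $\vec G(A)_{red}$ leaves it. *)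

theory Defs
  imports "Jordan_Normal_Form.Spectral_Radius" "Jordan_Normal_Form.DL_Submatrix"
          "HOL-Library.Extended_Real"
begin

definition nonneg_mat :: "real mat \<Rightarrow> bool" where
  "nonneg_mat A \<longleftrightarrow> (\<forall>i<dim_row A. \<forall>j<dim_col A. A $$ (i,j) \<ge> 0)"

definition nonneg_vec :: "real vec \<Rightarrow> bool" where
  "nonneg_vec x \<longleftrightarrow> (\<forall>i<dim_vec x. x $ i \<ge> 0)"

definition pos_vec :: "real vec \<Rightarrow> bool" where
  "pos_vec x \<longleftrightarrow> (\<forall>i<dim_vec x. x $ i > 0)"

definition quot_conv :: "real \<Rightarrow> real \<Rightarrow> ereal" where
  "quot_conv c d = (if d = 0 then (if c = 0 then 0 else \<infinity>) else ereal (c / d))"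

definition r_ratio :: "real mat \<Rightarrow> real mat \<Rightarrow> real vec \<Rightarrow> ereal" where
  "r_ratio A B x = (MAX i\<in>{0..<dim_row A}. quot_conv ((A *\<^sub>v x) $ i) ((B *\<^sub>v x) $ i))"

definition rho_pair :: "real mat \<Rightarrow> real mat \<Rightarrow> ereal" where
  "rho_pair A B = Inf {r_ratio A B x | x. x \<in> carrier_vec (dim_col A) \<and> pos_vec x}"

definition rho_hat_pair :: "real mat \<Rightarrow> real mat \<Rightarrow> ereal" where
  "rho_hat_pair A B = Inf {r_ratio A B x | x. x \<in> carrier_vec (dim_col A) \<and> nonneg_vec x
                                               \<and> x \<noteq> 0\<^sub>v (dim_col A)}"

definition sr :: "real mat \<Rightarrow> real" where
  "sr A = spectral_radius (map_mat complex_of_real A)"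

definition principal_submat :: "real mat \<Rightarrow> nat set \<Rightarrow> real mat" where
  "principal_submat A U = submatrix A U U"

definition edges :: "real mat \<Rightarrow> (nat \<times> nat) set" where
  "edges A = {(i,j). i < dim_row A \<and> j < dim_row A \<and> A $$ (i,j) \<noteq> 0}"

definition strongly_connected_set :: "real mat \<Rightarrow> nat set \<Rightarrow> bool" where
  "strongly_connected_set A W \<longleftrightarrow> W \<noteq> {} \<and>
     (\<forall>i\<in>W. \<forall>j\<in>W. (i,j) \<in> (edges A \<inter> (W \<times> W))\<^sup>*)"

definition is_scc :: "real mat \<Rightarrow> nat set \<Rightarrow> bool" where
  "is_scc A W \<longleftrightarrow> W \<subseteq> {0..<dim_row A} \<and> strongly_connected_set A W \<and>
     (\<forall>W'. W \<subseteq> W' \<and> W' \<subseteq> {0..<dim_row A} \<and> strongly_connected_set A W' \<longrightarrow> W' = W)"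

definition irreducible_mat :: "real mat \<Rightarrow> bool" where
  "irreducible_mat A \<longleftrightarrow> strongly_connected_set A {0..<dim_row A}"

text \<open>Edge in the reduced digraph between distinct components.\<close>
definition red_edge :: "real mat \<Rightarrow> nat set \<Rightarrow> nat set \<Rightarrow> bool" where
  "red_edge A V W \<longleftrightarrow> V \<noteq> W \<and> (\<exists>i\<in>V. \<exists>j\<in>W. (i,j) \<in> edges A)"

definition is_source :: "real mat \<Rightarrow> nat set \<Rightarrow> bool" where
  "is_source A V \<longleftrightarrow> \<not> (\<exists>W. is_scc A W \<and> red_edge A W V)"

definition is_sink :: "real mat \<Rightarrow> nat set \<Rightarrow> bool" where
  "is_sink A V \<longleftrightarrow> \<not> (\<exists>W. is_scc A W \<and> red_edge A V W)"

end

theory Submission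
  imports Defs
begin


lemma mv_sum: "M \<in> carrier_mat n n \<Longrightarrow> x \<in> carrier_vec n \<Longrightarrow> i < n \<Longrightarrow>
  (M *\<^sub>v x) $ i = (\<Sum>j<n. M $$ (i,j) * x $ j)"
  by (auto simp: mult_mat_vec_def scalar_prod_def atLeast0LessThan)


lemma of_real_mv: "M \<in> carrier_mat n n \<Longrightarrow> x \<in> carrier_vec n \<Longrightarrow>
  map_mat complex_of_real M *\<^sub>v map_vec complex_of_real x = map_vec complex_of_real (M *\<^sub>v x)"
proof (rule eq_vecI)
  fix i assume M: "M \<in> carrier_mat n n" and x: "x \<in> carrier_vec n" and "i < dim_vec (map_vec complex_of_real (M *\<^sub>v x))"
  then have i: "i < n" using M by auto
  have Mc: "map_mat complex_of_real M \<in> carrier_mat n n" using M by auto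
  show "(map_mat complex_of_real M *\<^sub>v map_vec complex_of_real x) $ i = map_vec complex_of_real (M *\<^sub>v x) $ i"
    using mv_sum[OF Mc _ i, of "map_vec complex_of_real x"] mv_sum[OF M x i] x M i by (auto simp: of_real_sum)
qed (auto)

lemma sr_nonneg: "M \<in> carrier_mat n n \<Longrightarrow> n > 0 \<Longrightarrow> sr M \<ge> 0"
proof -
  assume M: "M \<in> carrier_mat n n" and n: "n > 0"
  have Mc: "map_mat complex_of_real M \<in> carrier_mat n n" using M by auto
  from spectral_radius_mem_max(1)[OF Mc n] show ?thesis unfolding sr_def by auto
qed

lemma sr_eigen: assumes M: "M \<in> carrier_mat n n" and n: "n > 0"
  shows "\<exists>lam v. v \<in> carrier_vec n \<and> v \<noteq> 0\<^sub>v n \<and> map_mat complex_of_real M *\<^sub>v v = lam \<cdot>\<^sub>v v \<and> norm lam = sr M"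
proof -
  have Mc: "map_mat complex_of_real M \<in> carrier_mat n n" using M by auto
  from spectral_radius_mem_max(1)[OF Mc n] obtain lam where
    "lam \<in> spectrum (map_mat complex_of_real M)" "sr M = norm lam" unfolding sr_def by auto
  then show ?thesis unfolding spectrum_def eigenvalue_def eigenvector_def using Mc by auto
qed

lemma sr_ge_eigen: assumes M: "M \<in> carrier_mat n n"
  and v: "v \<in> carrier_vec n" "v \<noteq> 0\<^sub>v n" "map_mat complex_of_real M *\<^sub>v v = lam \<cdot>\<^sub>v v"
  shows "norm lam \<le> sr M"
proof -
  have Mc: "map_mat complex_of_real M \<in> carrier_mat n n" using M by auto
  have n: "n > 0" using v by (cases n, auto)
  have "lam \<in> spectrum (map_mat complex_of_real M)" unfolding spectrum_def eigenvalue_def eigenvector_def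
    using v Mc by auto
  from spectral_radius_mem_max(2)[OF Mc n] this show ?thesis unfolding sr_def by auto
qed




lemma cw_upper: assumes M: "M \<in> carrier_mat n n" and nn: "nonneg_mat M" and n: "n > 0"
  and x: "x \<in> carrier_vec n" "pos_vec x" and le: "\<And>i. i < n \<Longrightarrow> (M *\<^sub>v x) $ i \<le> s * x $ i"
  shows "sr M \<le> s"
proof -
  from sr_eigen[OF M n] obtain lam v where v: "v \<in> carrier_vec n" "v \<noteq> 0\<^sub>v n"
    and ev: "map_mat complex_of_real M *\<^sub>v v = lam \<cdot>\<^sub>v v" and srl: "cmod lam = sr M" by blast
  have Mc: "map_mat complex_of_real M \<in> carrier_mat n n" using M by auto
  have xp: "\<And>i. i < n \<Longrightarrow> x $ i > 0" using x unfolding pos_vec_def by auto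
  have Mnn: "\<And>i j. i < n \<Longrightarrow> j < n \<Longrightarrow> M $$ (i,j) \<ge> 0" using nn M unfolding nonneg_mat_def by auto
  define f where "f i = cmod (v $ i) / x $ i" for i
  define t where "t = Max (f ` {..<n})"
  have "t \<in> f ` {..<n}" unfolding t_def using n by (intro Max_in) auto
  then obtain i0 where i0: "i0 < n" "t = f i0" by auto
  have ft: "\<And>j. j < n \<Longrightarrow> f j \<le> t" unfolding t_def by auto
  have vb: "\<And>j. j < n \<Longrightarrow> cmod (v $ j) \<le> t * x $ j"
    using ft xp by (auto simp: f_def divide_le_eq)
  obtain j where j: "j < n" "v $ j \<noteq> 0" using v by (metis eq_vecI carrier_vecD index_zero_vec)
  have tpos: "t > 0" using ft[OF j(1)] j xp[OF j(1)] unfolding f_def by (smt (verit) divide_pos_pos zero_less_norm_iff)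
  have vi0: "cmod (v $ i0) = t * x $ i0" using i0 xp[OF i0(1)] unfolding f_def by auto
  have "cmod lam * cmod (v $ i0) = cmod ((map_mat complex_of_real M *\<^sub>v v) $ i0)"
    using ev i0 v by (simp add: norm_mult)
  also have "\<dots> = cmod (\<Sum>j<n. complex_of_real (M $$ (i0,j)) * v $ j)"
    using mv_sum[OF Mc v(1) i0(1)] i0 M by auto
  also have "\<dots> \<le> (\<Sum>j<n. cmod (complex_of_real (M $$ (i0,j)) * v $ j))" by (rule norm_sum)
  also have "\<dots> = (\<Sum>j<n. M $$ (i0,j) * cmod (v $ j))"
    by (rule sum.cong, auto simp: norm_mult Mnn i0)
  also have "\<dots> \<le> (\<Sum>j<n. M $$ (i0,j) * (t * x $ j))"
    by (rule sum_mono, rule mult_left_mono, auto simp: vb Mnn i0(1))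
  also have "\<dots> = t * (M *\<^sub>v x) $ i0"
    by (simp add: mv_sum[OF M x(1) i0(1)] sum_distrib_left mult_ac)
  also have "\<dots> \<le> t * (s * x $ i0)" using le[OF i0(1)] tpos by auto
  also have "\<dots> = s * cmod (v $ i0)" using vi0 by simp
  finally have "cmod lam * cmod (v $ i0) \<le> s * cmod (v $ i0)" .
  moreover have "cmod (v $ i0) > 0" using vi0 tpos xp[OF i0(1)] by auto
  ultimately show ?thesis using srl by auto
qed




lemma mono_mv: fixes M :: "real mat" assumes M: "M \<in> carrier_mat n n" and nn: "\<And>i j. i < n \<Longrightarrow> j < n \<Longrightarrow> M $$ (i,j) \<ge> 0"
  and w: "w \<in> carrier_vec n" "w' \<in> carrier_vec n" and le: "\<And>j. j < n \<Longrightarrow> w' $ j \<le> w $ j" and i: "i < n"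
  shows "(M *\<^sub>v w') $ i \<le> (M *\<^sub>v w) $ i"
  unfolding mv_sum[OF M w(1) i] mv_sum[OF M w(2) i]
  by (intro sum_mono mult_left_mono) (auto simp: le nn i)

lemma pow_nonneg: fixes M :: "real mat" assumes M: "M \<in> carrier_mat n n" and nn: "\<And>i j. i < n \<Longrightarrow> j < n \<Longrightarrow> M $$ (i,j) \<ge> 0"
  shows "i < n \<Longrightarrow> j < n \<Longrightarrow> (M ^\<^sub>m k) $$ (i,j) \<ge> 0"
proof (induction k arbitrary: i j)
  case 0 then show ?case using M by auto
next
  case (Suc k)
  have "(M ^\<^sub>m Suc k) $$ (i,j) = (\<Sum>l\<in>{0..<n}. (M ^\<^sub>m k) $$ (i,l) * M $$ (l,j))"
    using Suc.prems M by (auto simp: scalar_prod_def)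
  also have "\<dots> \<ge> 0" using Suc nn by (intro sum_nonneg mult_nonneg_nonneg) auto
  finally show ?case .
qed

lemma cw_lower: assumes M: "M \<in> carrier_mat n n" and nn: "nonneg_mat M"
  and z: "z \<in> carrier_vec n" "nonneg_vec z" "z \<noteq> 0\<^sub>v n"
  and ge: "\<And>i. i < n \<Longrightarrow> s * z $ i \<le> (M *\<^sub>v z) $ i"
  shows "s \<le> sr M"
proof (rule ccontr)
  assume "\<not> s \<le> sr M"
  hence lt: "sr M < s" by auto
  obtain i0 where i0: "i0 < n" "z $ i0 \<noteq> 0" using z by (metis eq_vecI carrier_vecD index_zero_vec)
  have n: "n > 0" using i0 by auto
  have z0: "\<And>j. j < n \<Longrightarrow> z $ j \<ge> 0" using z unfolding nonneg_vec_def by auto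
  have zi0: "z $ i0 > 0" using z0[OF i0(1)] i0 by auto
  have Mnn: "\<And>i j. i < n \<Longrightarrow> j < n \<Longrightarrow> M $$ (i,j) \<ge> 0" using nn M unfolding nonneg_mat_def by auto
  define s' where "s' = (sr M + s) / 2"
  have rho0: "sr M \<ge> 0" by (rule sr_nonneg[OF M n])
  have s'pos: "s' > 0" and s's: "s' < s" and rs': "sr M < s'" using rho0 lt unfolding s'_def by auto
  define N where "N = map_mat (\<lambda>a. a / s') M"
  have N: "N \<in> carrier_mat n n" using M unfolding N_def by auto
  have Nij: "\<And>i j. i < n \<Longrightarrow> j < n \<Longrightarrow> N $$ (i,j) = M $$ (i,j) / s'" using M unfolding N_def by auto
  have Nnn: "\<And>i j. i < n \<Longrightarrow> j < n \<Longrightarrow> N $$ (i,j) \<ge> 0" using Nij Mnn s'pos by auto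
  let ?Nc = "map_mat complex_of_real N"
  have Nc: "?Nc \<in> carrier_mat n n" using N by auto
  have Mc: "map_mat complex_of_real M \<in> carrier_mat n n" using M by auto
  have "spectral_radius ?Nc < 1"
  proof -
    from spectral_radius_mem_max(1)[OF Nc n] obtain mu where
      "mu \<in> spectrum ?Nc" and srm: "spectral_radius ?Nc = cmod mu" by auto
    then obtain v where v: "v \<in> carrier_vec n" "v \<noteq> 0\<^sub>v n" "?Nc *\<^sub>v v = mu \<cdot>\<^sub>v v"
      unfolding spectrum_def eigenvalue_def eigenvector_def using Nc by auto
    have "map_mat complex_of_real M *\<^sub>v v = (complex_of_real s' * mu) \<cdot>\<^sub>v v"
    proof (rule eq_vecI)
      fix i assume "i < dim_vec ((complex_of_real s' * mu) \<cdot>\<^sub>v v)"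
      hence i: "i < n" using v by auto
      have "(?Nc *\<^sub>v v) $ i = mu * v $ i" using v i by auto
      hence eq: "(\<Sum>j<n. complex_of_real (M $$ (i,j) / s') * v $ j) = mu * v $ i"
        using mv_sum[OF Nc v(1) i] i Nij N by auto
      have "(\<Sum>j<n. complex_of_real (M $$ (i,j)) * v $ j)
         = complex_of_real s' * (\<Sum>j<n. complex_of_real (M $$ (i,j) / s') * v $ j)"
        unfolding sum_distrib_left using s'pos by (intro sum.cong) (auto simp: of_real_divide field_simps)
      also have "\<dots> = complex_of_real s' * mu * v $ i" unfolding eq by simp
      finally have "(\<Sum>j<n. complex_of_real (M $$ (i,j)) * v $ j) = complex_of_real s' * mu * v $ i" .
      thus "(map_mat complex_of_real M *\<^sub>v v) $ i = ((complex_of_real s' * mu) \<cdot>\<^sub>v v) $ i"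
        using mv_sum[OF Mc v(1) i] i M v by auto
    qed (insert v M, auto)
    from sr_ge_eigen[OF M v(1,2) this] have "s' * cmod mu \<le> sr M" using s'pos by (simp add: norm_mult)
    hence "s' * cmod mu < s' * 1" using rs' by auto
    hence "cmod mu < 1" using s'pos by auto
    thus ?thesis using srm by auto
  qed
  from spectral_radius_jnf_norm_bound_less_1_upper_triangular[OF Nc this] obtain C where
    C: "\<And>k. norm_bound (?Nc ^\<^sub>m k) C" by auto
  have Cb: "\<And>k i j. i < n \<Longrightarrow> j < n \<Longrightarrow> (N ^\<^sub>m k) $$ (i,j) \<le> C"
  proof -
    fix k i j assume ij: "i < n" "j < n"
    have "?Nc ^\<^sub>m k = map_mat complex_of_real (N ^\<^sub>m k)" by (rule of_real_hom.mat_hom_pow[OF N, symmetric])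
    with C[of k] have "norm_bound (map_mat complex_of_real (N ^\<^sub>m k)) C" by simp
    hence "norm (complex_of_real ((N ^\<^sub>m k) $$ (i,j))) \<le> C" unfolding norm_bound_def using ij N by auto
    thus "(N ^\<^sub>m k) $$ (i,j) \<le> C" by auto
  qed
  define q where "q = s / s'"
  have q1: "q > 1" using s's s'pos unfolding q_def by auto
  have Nz: "\<And>i. i < n \<Longrightarrow> q * z $ i \<le> (N *\<^sub>v z) $ i"
  proof -
    fix i assume i: "i < n"
    have "(N *\<^sub>v z) $ i = (M *\<^sub>v z) $ i / s'"
      unfolding mv_sum[OF N z(1) i] mv_sum[OF M z(1) i] sum_divide_distrib using Nij i by auto
    thus "q * z $ i \<le> (N *\<^sub>v z) $ i" using ge[OF i] s'pos unfolding q_def by (auto simp: field_simps)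
  qed
  have pow: "\<And>i. i < n \<Longrightarrow> q ^ k * z $ i \<le> (N ^\<^sub>m k *\<^sub>v z) $ i" for k
  proof (induction k)
    case 0 then show ?case using z N by auto
  next
    case (Suc k)
    have Nk: "N ^\<^sub>m k \<in> carrier_mat n n" using N by auto
    have "q ^ Suc k * z $ i = q * (q ^ k * z $ i)" by simp
    also have "\<dots> \<le> q * (N ^\<^sub>m k *\<^sub>v z) $ i" using Suc q1 by auto
    also have "\<dots> = (N ^\<^sub>m k *\<^sub>v (q \<cdot>\<^sub>v z)) $ i"
      using Suc.prems z Nk N by (simp add: mult_mat_vec)
    also have "\<dots> \<le> (N ^\<^sub>m k *\<^sub>v (N *\<^sub>v z)) $ i"
      by (rule mono_mv[OF Nk pow_nonneg[OF N Nnn]], insert z N Nz Suc.prems, auto)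
    also have "\<dots> = (N ^\<^sub>m Suc k *\<^sub>v z) $ i"
      using N z by (simp add: assoc_mult_mat_vec[OF Nk N z(1)])
    finally show ?case .
  qed
  define S where "S = (\<Sum>j<n. z $ j)"
  have bound: "q ^ k * z $ i0 \<le> C * S" for k
  proof -
    have Nk: "N ^\<^sub>m k \<in> carrier_mat n n" using N by auto
    have "q ^ k * z $ i0 \<le> (N ^\<^sub>m k *\<^sub>v z) $ i0" by (rule pow[OF i0(1)])
    also have "\<dots> = (\<Sum>j<n. (N ^\<^sub>m k) $$ (i0,j) * z $ j)" by (rule mv_sum[OF Nk z(1) i0(1)])
    also have "\<dots> \<le> (\<Sum>j<n. C * z $ j)" by (rule sum_mono, rule mult_right_mono, auto simp: Cb i0 z0)
    finally show ?thesis by (simp add: S_def sum_distrib_left)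
  qed
  from real_arch_pow[OF q1, of "C * S / z $ i0"] obtain k where "C * S / z $ i0 < q ^ k" by auto
  with bound[of k] zi0 show False by (auto simp: field_simps)
qed




lemma not_eig: fixes M :: "real mat" assumes M: "M \<in> carrier_mat n n" and s: "s > sr M"
  and w: "w \<in> carrier_vec n" and eq: "M *\<^sub>v w = s \<cdot>\<^sub>v w"
  shows "w = 0\<^sub>v n"
proof (rule ccontr)
  assume nz: "w \<noteq> 0\<^sub>v n"
  hence n: "n > 0" using w by (cases n, auto)
  let ?v = "map_vec complex_of_real w"
  have v: "?v \<in> carrier_vec n" using w by auto
  have vnz: "?v \<noteq> 0\<^sub>v n"
  proof
    assume "?v = 0\<^sub>v n"
    hence "\<And>i. i < n \<Longrightarrow> complex_of_real (w $ i) = 0" using w by (metis carrier_vecD index_map_vec(1) index_zero_vec(1))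
    hence "w = 0\<^sub>v n" using w by (intro eq_vecI) auto
    with nz show False by auto
  qed
  have "map_mat complex_of_real M *\<^sub>v ?v = complex_of_real s \<cdot>\<^sub>v ?v"
    unfolding of_real_mv[OF M w] eq by (rule eq_vecI, auto)
  from sr_ge_eigen[OF M v vnz this] have "\<bar>s\<bar> \<le> sr M" by simp
  with s show False by auto
qed

definition shiftm :: "real \<Rightarrow> real mat \<Rightarrow> nat \<Rightarrow> real mat" where
  "shiftm s M n = mat n n (\<lambda>(i,j). (if i = j then s else 0) - M $$ (i,j))"

lemma shiftm_mv: assumes M: "M \<in> carrier_mat n n" and x: "x \<in> carrier_vec n" and i: "i < n"
  shows "(shiftm s M n *\<^sub>v x) $ i = s * x $ i - (M *\<^sub>v x) $ i"
proof -
  have K: "shiftm s M n \<in> carrier_mat n n" unfolding shiftm_def by auto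
  have "(shiftm s M n *\<^sub>v x) $ i = (\<Sum>j<n. ((if i = j then s else 0) - M $$ (i,j)) * x $ j)"
    unfolding mv_sum[OF K x i] using i by (intro sum.cong) (auto simp: shiftm_def)
  also have "\<dots> = (\<Sum>j<n. (if i = j then s * x $ j else 0)) - (\<Sum>j<n. M $$ (i,j) * x $ j)"
    by (subst sum_subtractf[symmetric], rule sum.cong, auto simp: algebra_simps)
  also have "\<dots> = s * x $ i - (M *\<^sub>v x) $ i" using i by (simp add: mv_sum[OF M x i])
  finally show ?thesis .
qed

lemma solve_shift: fixes M :: "real mat" assumes M: "M \<in> carrier_mat n n" and s: "s > sr M"
  and c: "c \<in> carrier_vec n"
  shows "\<exists>x \<in> carrier_vec n. \<forall>i < n. s * x $ i - (M *\<^sub>v x) $ i = c $ i"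
proof -
  let ?K = "shiftm s M n"
  have K: "?K \<in> carrier_mat n n" unfolding shiftm_def by auto
  have "det ?K \<noteq> 0"
  proof
    assume "det ?K = 0"
    from this[unfolded det_0_iff_vec_prod_zero[OF K]] obtain w where
      w: "w \<in> carrier_vec n" "w \<noteq> 0\<^sub>v n" "?K *\<^sub>v w = 0\<^sub>v n" by auto
    have "M *\<^sub>v w = s \<cdot>\<^sub>v w"
    proof (rule eq_vecI)
      fix i assume "i < dim_vec (s \<cdot>\<^sub>v w)" hence i: "i < n" using w by auto
      have "(?K *\<^sub>v w) $ i = 0" using w(3) i by auto
      thus "(M *\<^sub>v w) $ i = (s \<cdot>\<^sub>v w) $ i" unfolding shiftm_mv[OF M w(1) i] using i w by auto
    qed (insert M w, auto)
    from not_eig[OF M s w(1) this] w(2) show False by auto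
  qed
  from det_non_zero_imp_unit[OF K this, of undefined] obtain B where
    B: "B \<in> carrier_mat n n" and KB: "?K * B = 1\<^sub>m n"
    unfolding Units_def ring_mat_def by auto
  have "?K *\<^sub>v (B *\<^sub>v c) = c" using K B c KB by (simp add: assoc_mult_mat_vec[symmetric])
  then show ?thesis using shiftm_mv[OF M, of "B *\<^sub>v c"] B c
    by (intro bexI[of _ "B *\<^sub>v c"], auto) (metis index_mult_mat_vec K carrier_matD(1))
qed

lemma nonneg_sol: fixes M :: "real mat" assumes M: "M \<in> carrier_mat n n" and nn: "nonneg_mat M"
  and s: "s > sr M" and x: "x \<in> carrier_vec n" and le: "\<And>i. i < n \<Longrightarrow> (M *\<^sub>v x) $ i \<le> s * x $ i"
  and i: "i < n"
  shows "x $ i \<ge> 0"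
proof (rule ccontr)
  assume neg: "\<not> x $ i \<ge> 0"
  define y where "y = vec n (\<lambda>i. max 0 (- x $ i))"
  have y: "y \<in> carrier_vec n" unfolding y_def by auto
  have ynn: "nonneg_vec y" unfolding y_def nonneg_vec_def by auto
  have ynz: "y \<noteq> 0\<^sub>v n"
  proof
    assume "y = 0\<^sub>v n"
    hence "y $ i = 0" using i by auto
    thus False using neg i unfolding y_def by auto
  qed
  have Mnn: "\<And>i j. i < n \<Longrightarrow> j < n \<Longrightarrow> M $$ (i,j) \<ge> 0" using nn M unfolding nonneg_mat_def by auto
  have "s \<le> sr M"
  proof (rule cw_lower[OF M nn y ynn ynz])
    fix k assume k: "k < n"
    have My: "(M *\<^sub>v y) $ k \<ge> 0" unfolding mv_sum[OF M y k] using Mnn k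
      by (intro sum_nonneg mult_nonneg_nonneg) (auto simp: y_def)
    show "s * y $ k \<le> (M *\<^sub>v y) $ k"
    proof (cases "x $ k \<ge> 0")
      case True thus ?thesis using My k by (auto simp: y_def)
    next
      case False
      have "s * y $ k = - (s * x $ k)" using False k by (auto simp: y_def)
      also have "\<dots> \<le> - (M *\<^sub>v x) $ k" using le[OF k] by auto
      also have "\<dots> = (\<Sum>j<n. M $$ (k,j) * (- x $ j))" unfolding mv_sum[OF M x k] by (simp add: sum_negf)
      also have "\<dots> \<le> (\<Sum>j<n. M $$ (k,j) * y $ j)"
        by (intro sum_mono mult_left_mono) (auto simp: y_def Mnn k)
      finally show ?thesis unfolding mv_sum[OF M y k] .
    qed
  qed
  with s show False by auto
qed




lemma bw_fin: fixes X :: "nat \<Rightarrow> nat \<Rightarrow> real"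
  assumes B: "\<And>k i. i < n \<Longrightarrow> \<bar>X k i\<bar> \<le> B"
  shows "\<exists>r. strict_mono r \<and> (\<forall>i<n. convergent (\<lambda>j. X (r j) i))"
  using B
proof (induction n)
  case 0 show ?case by (intro exI[of _ id]) (auto simp: strict_mono_def)
next
  case (Suc n)
  from Suc.IH Suc.prems obtain r where r: "strict_mono r" "\<forall>i<n. convergent (\<lambda>j. X (r j) i)" by auto
  from seq_monosub[of "\<lambda>j. X (r j) n"] obtain f where f: "strict_mono f" "monoseq (\<lambda>j. X (r (f j)) n)" by auto
  have "Bseq (\<lambda>j. X (r (f j)) n)" using Suc.prems by (intro BseqI') auto
  with f have cn: "convergent (\<lambda>j. X (r (f j)) n)" by (intro Bseq_monoseq_convergent)
  have "\<forall>i<Suc n. convergent (\<lambda>j. X ((r \<circ> f) j) i)"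
  proof (intro allI impI)
    fix i assume "i < Suc n"
    show "convergent (\<lambda>j. X ((r \<circ> f) j) i)"
    proof (cases "i = n")
      case True thus ?thesis using cn by auto
    next
      case False
      with \<open>i < Suc n\<close> have "convergent (\<lambda>j. X (r j) i)" using r by auto
      from convergent_subseq_convergent[OF this f(1)] show ?thesis by (simp add: o_def)
    qed
  qed
  with strict_mono_o[OF r(1) f(1)] show ?case by blast
qed

lemma pf_eig: fixes M :: "real mat" assumes M: "M \<in> carrier_mat n n" and nn: "nonneg_mat M" and n: "n > 0"
  shows "\<exists>y \<in> carrier_vec n. nonneg_vec y \<and> y \<noteq> 0\<^sub>v n \<and> M *\<^sub>v y = sr M \<cdot>\<^sub>v y"
proof -
  define rho where "rho = sr M"
  have rho0: "rho \<ge> 0" unfolding rho_def by (rule sr_nonneg[OF M n])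
  from sr_eigen[OF M n] obtain lam v where v: "v \<in> carrier_vec n" "v \<noteq> 0\<^sub>v n"
    and ev: "map_mat complex_of_real M *\<^sub>v v = lam \<cdot>\<^sub>v v" and srl: "cmod lam = rho" unfolding rho_def by blast
  have Mc: "map_mat complex_of_real M \<in> carrier_mat n n" using M by auto
  have Mnn: "\<And>i j. i < n \<Longrightarrow> j < n \<Longrightarrow> M $$ (i,j) \<ge> 0" using nn M unfolding nonneg_mat_def by auto
  define p where "p = vec n (\<lambda>i. cmod (v $ i))"
  have p: "p \<in> carrier_vec n" unfolding p_def by auto
  have p0: "\<And>i. i < n \<Longrightarrow> p $ i \<ge> 0" unfolding p_def by auto
  obtain j0 where j0: "j0 < n" "v $ j0 \<noteq> 0" using v by (metis eq_vecI carrier_vecD index_zero_vec)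
  define P where "P = (\<Sum>i<n. p $ i)"
  have "p $ j0 > 0" using j0 unfolding p_def by auto
  hence Ppos: "P > 0" unfolding P_def using j0 p0
    by (intro sum_pos2[of "{..<n}" j0]) auto
  have Mp: "\<And>i. i < n \<Longrightarrow> rho * p $ i \<le> (M *\<^sub>v p) $ i"
  proof -
    fix i assume i: "i < n"
    have "rho * p $ i = cmod ((map_mat complex_of_real M *\<^sub>v v) $ i)"
      using ev i v srl by (simp add: p_def norm_mult)
    also have "\<dots> = cmod (\<Sum>j<n. complex_of_real (M $$ (i,j)) * v $ j)"
      using mv_sum[OF Mc v(1) i] i M by auto
    also have "\<dots> \<le> (\<Sum>j<n. cmod (complex_of_real (M $$ (i,j)) * v $ j))" by (rule norm_sum)
    also have "\<dots> = (\<Sum>j<n. M $$ (i,j) * p $ j)"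
      by (rule sum.cong, auto simp: norm_mult Mnn i p_def)
    finally show "rho * p $ i \<le> (M *\<^sub>v p) $ i" unfolding mv_sum[OF M p i] .
  qed
  define s where "s k = rho + inverse (real (Suc k))" for k
  have s_gt: "s k > rho" for k unfolding s_def by auto
  have s_lim: "s \<longlonglongrightarrow> rho" unfolding s_def by (rule LIMSEQ_inverse_real_of_nat_add)
  have "\<forall>k. \<exists>x \<in> carrier_vec n. \<forall>i < n. s k * x $ i - (M *\<^sub>v x) $ i = p $ i"
    using solve_shift[OF M _ p] s_gt unfolding rho_def by auto
  then obtain X where X: "\<And>k. X k \<in> carrier_vec n" and Xeq: "\<And>k i. i < n \<Longrightarrow> s k * X k $ i - (M *\<^sub>v X k) $ i = p $ i"
    by metis
  have Xbig: "\<And>k i. i < n \<Longrightarrow> X k $ i \<ge> real (Suc k) * p $ i"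
  proof -
    fix k i assume i: "i < n"
    define d where "d = X k - real (Suc k) \<cdot>\<^sub>v p"
    have d: "d \<in> carrier_vec n" unfolding d_def using X p by auto
    have "d $ i \<ge> 0"
    proof (rule nonneg_sol[OF M nn _ d _ i])
      show "sr M < s k" using s_gt unfolding rho_def by auto
      fix l assume l: "l < n"
      have dj: "\<And>j. j < n \<Longrightarrow> d $ j = X k $ j - real (Suc k) * p $ j" unfolding d_def using X p by simp
      have Md: "(M *\<^sub>v d) $ l = (M *\<^sub>v X k) $ l - real (Suc k) * (M *\<^sub>v p) $ l"
      proof -
        have "(M *\<^sub>v d) $ l = (\<Sum>j<n. M $$ (l,j) * X k $ j - real (Suc k) * (M $$ (l,j) * p $ j))"
          unfolding mv_sum[OF M d l] by (rule sum.cong, auto simp: dj algebra_simps)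
        also have "\<dots> = (M *\<^sub>v X k) $ l - real (Suc k) * (M *\<^sub>v p) $ l"
          unfolding mv_sum[OF M X l] mv_sum[OF M p l] sum_subtractf sum_distrib_left ..
        finally show ?thesis .
      qed
      have h0: "(M *\<^sub>v X k) $ l = s k * X k $ l - p $ l" using Xeq[OF l, of k] by linarith
      have e1: "real (Suc k) * (s k - rho) = 1" unfolding s_def by simp
      have "real (Suc k) * s k * p $ l - real (Suc k) * rho * p $ l = (real (Suc k) * (s k - rho)) * p $ l"
        by (simp add: algebra_simps)
      hence h1: "real (Suc k) * s k * p $ l - real (Suc k) * rho * p $ l = p $ l" unfolding e1 by simp
      have h2: "real (Suc k) * rho * p $ l \<le> real (Suc k) * (M *\<^sub>v p) $ l" using Mp[OF l]
        by (simp add: mult.assoc)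
      have "(M *\<^sub>v d) $ l \<le> s k * X k $ l - real (Suc k) * s k * p $ l"
        unfolding Md h0 using h1 h2 by linarith
      thus "(M *\<^sub>v d) $ l \<le> s k * d $ l" unfolding d_def using X p l by (auto simp: algebra_simps)
    qed
    thus "X k $ i \<ge> real (Suc k) * p $ i" unfolding d_def using X p i by auto
  qed
  have X0: "X k $ i \<ge> 0" if i: "i < n" for k i
  proof -
    have "0 \<le> real (Suc k) * p $ i" using p0[OF i] by simp
    thus ?thesis using Xbig[OF i, of k] by linarith
  qed
  define S where "S k = (\<Sum>i<n. X k $ i)" for k
  have Sbig: "S k \<ge> real (Suc k) * P" for k
    unfolding S_def P_def sum_distrib_left by (rule sum_mono, rule Xbig, auto)
  have Spos: "S k > 0" for k
  proof -
    have "0 < real (Suc k) * P" using Ppos by simp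
    thus ?thesis using Sbig[of k] by linarith
  qed
  define U where "U k i = X k $ i / S k" for k i
  have U0: "\<And>k i. i < n \<Longrightarrow> U k i \<ge> 0" unfolding U_def using X0 Spos by (simp add: less_imp_le)
  have Ule: "\<And>k i. i < n \<Longrightarrow> U k i \<le> 1"
  proof -
    fix k i assume i: "i < n"
    have "X k $ i \<le> S k" unfolding S_def
      by (rule member_le_sum[of i "{..<n}" "\<lambda>i. X k $ i"], insert i X0, auto)
    thus "U k i \<le> 1" unfolding U_def using Spos[of k] by auto
  qed
  have Usum: "(\<Sum>i<n. U k i) = 1" for k unfolding U_def S_def[symmetric] sum_divide_distrib[symmetric]
    using Spos[of k] by auto
  have Uabs: "\<And>k i. i < n \<Longrightarrow> \<bar>U k i\<bar> \<le> 1" using U0 Ule by (simp add: abs_le_iff)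
  from bw_fin[of n U 1, OF Uabs] obtain r where r: "strict_mono r" "\<forall>i<n. convergent (\<lambda>j. U (r j) i)"
    by blast
  define L where "L i = lim (\<lambda>j. U (r j) i)" for i
  have UL: "\<And>i. i < n \<Longrightarrow> (\<lambda>j. U (r j) i) \<longlonglongrightarrow> L i" unfolding L_def using r(2) convergent_LIMSEQ_iff by auto
  define u where "u = vec n L"
  have u: "u \<in> carrier_vec n" unfolding u_def by auto
  have L0: "\<And>i. i < n \<Longrightarrow> L i \<ge> 0"
    using UL U0 by (meson LIMSEQ_le_const)
  have Lsum: "(\<Sum>i<n. L i) = 1"
  proof -
    have "(\<lambda>j. \<Sum>i<n. U (r j) i) \<longlonglongrightarrow> (\<Sum>i<n. L i)" by (rule tendsto_sum, auto simp: UL)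
    moreover have "(\<lambda>j. \<Sum>i<n. U (r j) i) = (\<lambda>j. 1)" using Usum by auto
    ultimately have "(\<lambda>j. 1::real) \<longlonglongrightarrow> (\<Sum>i<n. L i)" by simp
    thus ?thesis by (simp add: LIMSEQ_const_iff)
  qed
  have pS: "\<And>i. i < n \<Longrightarrow> (\<lambda>k. p $ i / S k) \<longlonglongrightarrow> 0"
  proof -
    fix i assume i: "i < n"
    have "(\<lambda>k. (p $ i / P) * inverse (real (Suc k))) \<longlonglongrightarrow> (p $ i / P) * 0"
      by (intro tendsto_mult tendsto_const LIMSEQ_inverse_real_of_nat)
    hence up: "(\<lambda>k. (p $ i / P) * inverse (real (Suc k))) \<longlonglongrightarrow> 0" by simp
    show "(\<lambda>k. p $ i / S k) \<longlonglongrightarrow> 0"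
    proof (rule tendsto_sandwich[OF _ _ tendsto_const up])
      show "\<forall>\<^sub>F k in sequentially. 0 \<le> p $ i / S k" using p0[OF i] Spos by (auto simp: less_imp_le)
      show "\<forall>\<^sub>F k in sequentially. p $ i / S k \<le> p $ i / P * inverse (real (Suc k))"
      proof (rule always_eventually, rule allI)
        fix k
        have "p $ i / S k \<le> p $ i / (real (Suc k) * P)"
          by (rule divide_left_mono, insert Sbig[of k] p0[OF i] Ppos Spos[of k], auto)
        thus "p $ i / S k \<le> p $ i / P * inverse (real (Suc k))" by (simp add: field_simps)
      qed
    qed
  qed
  have "M *\<^sub>v u = rho \<cdot>\<^sub>v u"
  proof (rule eq_vecI)
    fix i assume "i < dim_vec (rho \<cdot>\<^sub>v u)" hence i: "i < n" using u by auto
    have lim1: "(\<lambda>j. \<Sum>l<n. M $$ (i,l) * U (r j) l) \<longlonglongrightarrow> (\<Sum>l<n. M $$ (i,l) * L l)"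
      by (intro tendsto_sum tendsto_mult tendsto_const UL) auto
    have eqj: "(\<Sum>l<n. M $$ (i,l) * U k l) = s k * U k i - p $ i / S k" for k
    proof -
      have "(\<Sum>l<n. M $$ (i,l) * U k l) = (M *\<^sub>v X k) $ i / S k"
        unfolding mv_sum[OF M X i] U_def sum_divide_distrib by auto
      also have "\<dots> = (s k * X k $ i - p $ i) / S k" using Xeq[OF i] by (auto simp: algebra_simps)
      finally show ?thesis unfolding U_def by (simp add: diff_divide_distrib)
    qed
    have lim2: "(\<lambda>j. s (r j) * U (r j) i - p $ i / S (r j)) \<longlonglongrightarrow> rho * L i - 0"
      by (intro tendsto_diff tendsto_mult UL[OF i],
          insert LIMSEQ_subseq_LIMSEQ[OF s_lim r(1)] LIMSEQ_subseq_LIMSEQ[OF pS[OF i] r(1)], auto simp: o_def)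
    from lim1 lim2 have "(\<Sum>l<n. M $$ (i,l) * L l) = rho * L i"
      unfolding eqj using LIMSEQ_unique by fastforce
    thus "(M *\<^sub>v u) $ i = (rho \<cdot>\<^sub>v u) $ i" unfolding mv_sum[OF M u i] using i by (simp add: u_def)
  qed (insert M u, auto)
  moreover have "nonneg_vec u" unfolding nonneg_vec_def u_def using L0 by auto
  moreover have "u \<noteq> 0\<^sub>v n"
  proof
    assume "u = 0\<^sub>v n"
    hence "\<And>i. i < n \<Longrightarrow> L i = 0" unfolding u_def by (metis index_vec index_zero_vec(1))
    with Lsum show False by auto
  qed
  ultimately show ?thesis using u unfolding rho_def by blast
qed




definition idx :: "nat set \<Rightarrow> nat \<Rightarrow> nat" where "idx V i = card {a\<in>V. a < i}"

lemma pick_bij: assumes fin: "finite V" shows "bij_betw (pick V) {..<card V} V"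
proof (rule bij_betw_imageI)
  show "inj_on (pick V) {..<card V}"
  proof (rule inj_onI)
    fix a b assume a: "a \<in> {..<card V}" and b: "b \<in> {..<card V}" and eq: "pick V a = pick V b"
    show "a = b"
    proof (rule ccontr)
      assume "a \<noteq> b"
      hence "a < b \<or> b < a" by auto
      thus False using pick_mono_le[of b V a] pick_mono_le[of a V b] a b eq by auto
    qed
  qed
  show "pick V ` {..<card V} = V"
  proof
    show "pick V ` {..<card V} \<subseteq> V" using pick_in_set_le by auto
    show "V \<subseteq> pick V ` {..<card V}"
    proof
      fix i assume i: "i \<in> V"
      have "{a\<in>V. a < i} \<subset> V" using i by blast
      hence "card {a\<in>V. a < i} < card V" by (rule psubset_card_mono[OF fin])
      moreover have "pick V (card {a\<in>V. a < i}) = i" using pick_card_in_set[OF i] .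
      ultimately show "i \<in> pick V ` {..<card V}" by (intro image_eqI[where x="card {a\<in>V. a < i}"]) auto
    qed
  qed
qed

lemma idx_lt: "finite V \<Longrightarrow> i \<in> V \<Longrightarrow> idx V i < card V"
  unfolding idx_def by (rule psubset_card_mono, auto)

lemma pick_idx: "i \<in> V \<Longrightarrow> pick V (idx V i) = i"
  unfolding idx_def by (rule pick_card_in_set)

lemma idx_pick: "j < card V \<Longrightarrow> idx V (pick V j) = j"
  unfolding idx_def by (rule card_pick_le)

lemma sum_pick: assumes "finite V" shows "(\<Sum>j\<in>V. f j) = (\<Sum>j<card V. f (pick V j))"
  using sum.reindex_bij_betw[OF pick_bij[OF assms], of f] by simp

context
  fixes A :: "real mat" and m :: nat and V :: "nat set"
  assumes A: "A \<in> carrier_mat m m" and nn: "nonneg_mat A" and V: "V \<subseteq> {0..<m}" "V \<noteq> {}"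
begin

lemma Vfin: "finite V" using V finite_subset by blast

lemma Vset: "{i. i < dim_row A \<and> i \<in> V} = V" using V A by auto

lemma sub_carrier: "principal_submat A V \<in> carrier_mat (card V) (card V)"
  unfolding principal_submat_def carrier_mat_def using Vset A by (auto simp: dim_submatrix)

lemma sub_index: "i < card V \<Longrightarrow> j < card V \<Longrightarrow> principal_submat A V $$ (i,j) = A $$ (pick V i, pick V j)"
  unfolding principal_submat_def using Vset A by (intro submatrix_index) auto

lemma pick_lt: "j < card V \<Longrightarrow> pick V j < m" using pick_in_set_le[of j V] V by auto

lemma sub_nonneg: "nonneg_mat (principal_submat A V)"
  unfolding nonneg_mat_def using sub_carrier sub_index nn A pick_lt unfolding nonneg_mat_def by auto

lemma card_pos: "card V > 0" using V Vfin by (simp add: card_gt_0_iff)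

lemma sub_mv: assumes v: "v \<in> carrier_vec (card V)" and i: "i \<in> V"
  shows "(principal_submat A V *\<^sub>v v) $ idx V i = (\<Sum>j\<in>V. A $$ (i,j) * v $ idx V j)"
proof -
  have "(principal_submat A V *\<^sub>v v) $ idx V i = (\<Sum>j<card V. principal_submat A V $$ (idx V i, j) * v $ j)"
    by (rule mv_sum[OF sub_carrier v idx_lt[OF Vfin i]])
  also have "\<dots> = (\<Sum>j<card V. A $$ (i, pick V j) * v $ idx V (pick V j))"
    by (rule sum.cong, auto simp: sub_index idx_lt[OF Vfin i] pick_idx[OF i] idx_pick)
  also have "\<dots> = (\<Sum>j\<in>V. A $$ (i,j) * v $ idx V j)" by (rule sum_pick[OF Vfin, symmetric])
  finally show ?thesis .
qed

lemma sub_eig: "\<exists>y \<in> carrier_vec m. nonneg_vec y \<and> (\<forall>i<m. i \<notin> V \<longrightarrow> y $ i = 0) \<and> (\<exists>i\<in>V. y $ i \<noteq> 0) \<and>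
   (\<forall>i\<in>V. (\<Sum>j\<in>V. A $$ (i,j) * y $ j) = sr (principal_submat A V) * y $ i)"
proof -
  from pf_eig[OF sub_carrier sub_nonneg card_pos] obtain v where v: "v \<in> carrier_vec (card V)"
    "nonneg_vec v" "v \<noteq> 0\<^sub>v (card V)" "principal_submat A V *\<^sub>v v = sr (principal_submat A V) \<cdot>\<^sub>v v" by auto
  define y where "y = vec m (\<lambda>i. if i \<in> V then v $ idx V i else 0)"
  have yV: "\<And>i. i \<in> V \<Longrightarrow> y $ i = v $ idx V i" unfolding y_def using V by auto
  have "y \<in> carrier_vec m" unfolding y_def by auto
  moreover have "nonneg_vec y" using v(1,2) unfolding nonneg_vec_def y_def using idx_lt[OF Vfin] by auto
  moreover have "\<forall>i<m. i \<notin> V \<longrightarrow> y $ i = 0" unfolding y_def by auto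
  moreover have "\<exists>i\<in>V. y $ i \<noteq> 0"
  proof -
    obtain j where j: "j < card V" "v $ j \<noteq> 0" using v by (metis eq_vecI carrier_vecD index_zero_vec)
    have pj: "pick V j \<in> V" by (rule pick_in_set_le[OF j(1)])
    have "y $ pick V j = v $ j" using yV[OF pj] idx_pick[OF j(1)] by simp
    hence "y $ pick V j \<noteq> 0" using j(2) by simp
    with pj show ?thesis by blast
  qed
  moreover have "\<forall>i\<in>V. (\<Sum>j\<in>V. A $$ (i,j) * y $ j) = sr (principal_submat A V) * y $ i"
  proof
    fix i assume i: "i \<in> V"
    have "(\<Sum>j\<in>V. A $$ (i,j) * y $ j) = (\<Sum>j\<in>V. A $$ (i,j) * v $ idx V j)" by (rule sum.cong, auto simp: yV)
    also have "\<dots> = (principal_submat A V *\<^sub>v v) $ idx V i" by (rule sub_mv[OF v(1) i, symmetric])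
    also have "\<dots> = sr (principal_submat A V) * y $ i" unfolding v(4) using v(1) idx_lt[OF Vfin i] yV[OF i] by auto
    finally show "(\<Sum>j\<in>V. A $$ (i,j) * y $ j) = sr (principal_submat A V) * y $ i" .
  qed
  ultimately show ?thesis by blast
qed

lemma sub_lower: assumes z: "z \<in> carrier_vec m" "\<And>i. i \<in> V \<Longrightarrow> z $ i \<ge> 0" "i0 \<in> V" "z $ i0 \<noteq> 0"
  and ge: "\<And>i. i \<in> V \<Longrightarrow> s * z $ i \<le> (\<Sum>j\<in>V. A $$ (i,j) * z $ j)"
  shows "s \<le> sr (principal_submat A V)"
proof -
  define v where "v = vec (card V) (\<lambda>j. z $ pick V j)"
  have v: "v \<in> carrier_vec (card V)" unfolding v_def by auto
  have vi: "\<And>i. i \<in> V \<Longrightarrow> v $ idx V i = z $ i" unfolding v_def using idx_lt[OF Vfin] pick_idx by auto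
  show ?thesis
  proof (rule cw_lower[OF sub_carrier sub_nonneg v])
    show "nonneg_vec v" unfolding nonneg_vec_def v_def using z(2) pick_in_set_le by auto
    show "v \<noteq> 0\<^sub>v (card V)"
    proof
      assume "v = 0\<^sub>v (card V)"
      hence "v $ idx V i0 = 0" using idx_lt[OF Vfin z(3)] by auto
      with vi[OF z(3)] z(4) show False by auto
    qed
    fix j assume j: "j < card V"
    have pj: "pick V j \<in> V" using pick_in_set_le[OF j] .
    have "s * v $ j = s * z $ pick V j" unfolding v_def using j by auto
    also have "\<dots> \<le> (\<Sum>l\<in>V. A $$ (pick V j,l) * z $ l)" by (rule ge[OF pj])
    also have "\<dots> = (\<Sum>l\<in>V. A $$ (pick V j,l) * v $ idx V l)" by (rule sum.cong, auto simp: vi)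
    also have "\<dots> = (principal_submat A V *\<^sub>v v) $ idx V (pick V j)" by (rule sub_mv[OF v pj, symmetric])
    finally show "s * v $ j \<le> (principal_submat A V *\<^sub>v v) $ j" unfolding idx_pick[OF j] .
  qed
qed

lemma sub_solve: assumes s: "s > sr (principal_submat A V)" and c: "\<And>i. i \<in> V \<Longrightarrow> c i > 0"
  shows "\<exists>x. (\<forall>i\<in>V. x i > 0) \<and> (\<forall>i\<in>V. s * x i - (\<Sum>j\<in>V. A $$ (i,j) * x j) = c i)"
proof -
  let ?B = "principal_submat A V"
  define cv where "cv = vec (card V) (\<lambda>j. c (pick V j))"
  have cv: "cv \<in> carrier_vec (card V)" unfolding cv_def by auto
  from solve_shift[OF sub_carrier s cv] obtain v where v: "v \<in> carrier_vec (card V)"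
    and eq: "\<And>j. j < card V \<Longrightarrow> s * v $ j - (?B *\<^sub>v v) $ j = cv $ j" by auto
  have v0: "\<And>j. j < card V \<Longrightarrow> v $ j \<ge> 0"
  proof (rule nonneg_sol[OF sub_carrier sub_nonneg s v])
    fix j assume j: "j < card V"
    have "cv $ j > 0" unfolding cv_def using j c pick_in_set_le[OF j] by auto
    thus "(?B *\<^sub>v v) $ j \<le> s * v $ j" using eq[OF j] by auto
  qed
  have s0: "s > 0" using s sr_nonneg[OF sub_carrier card_pos] by auto
  define x where "x i = v $ idx V i" for i
  have eqx: "\<forall>i\<in>V. s * x i - (\<Sum>j\<in>V. A $$ (i,j) * x j) = c i"
  proof
    fix i assume i: "i \<in> V"
    have "s * x i - (\<Sum>j\<in>V. A $$ (i,j) * x j) = s * v $ idx V i - (?B *\<^sub>v v) $ idx V i"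
      unfolding x_def sub_mv[OF v i] ..
    also have "\<dots> = cv $ idx V i" by (rule eq[OF idx_lt[OF Vfin i]])
    also have "\<dots> = c i" unfolding cv_def using idx_lt[OF Vfin i] pick_idx[OF i] by auto
    finally show "s * x i - (\<Sum>j\<in>V. A $$ (i,j) * x j) = c i" .
  qed
  have "\<forall>i\<in>V. x i > 0"
  proof
    fix i assume i: "i \<in> V"
    have Vm: "\<And>j. j \<in> V \<Longrightarrow> j < m" using V by auto
    have "(\<Sum>j\<in>V. A $$ (i,j) * x j) \<ge> 0"
    proof (rule sum_nonneg)
      fix j assume j: "j \<in> V"
      have "A $$ (i,j) \<ge> 0" using nn A Vm[OF i] Vm[OF j] unfolding nonneg_mat_def by auto
      moreover have "x j \<ge> 0" unfolding x_def by (rule v0[OF idx_lt[OF Vfin j]])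
      ultimately show "A $$ (i,j) * x j \<ge> 0" by simp
    qed
    moreover have "s * x i - (\<Sum>j\<in>V. A $$ (i,j) * x j) = c i" using eqx i by blast
    ultimately have "s * x i > 0" using c[OF i] by linarith
    thus "x i > 0" using s0 by (simp add: zero_less_mult_iff)
  qed
  with eqx show ?thesis by blast
qed

end




definition Cl :: "real mat \<Rightarrow> nat \<Rightarrow> nat set" where
  "Cl A w = {j. j < dim_row A \<and> (w,j) \<in> (edges A)\<^sup>* \<and> (j,w) \<in> (edges A)\<^sup>*}"

lemma edges_lt: "(i,j) \<in> edges A \<Longrightarrow> i < dim_row A \<and> j < dim_row A"
  unfolding edges_def by auto

lemma rtrancl_within: assumes "(a,b) \<in> (edges A)\<^sup>*" "(b,w) \<in> (edges A)\<^sup>*" "(w,a) \<in> (edges A)\<^sup>*"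
  shows "(a,b) \<in> (edges A \<inter> (Cl A w \<times> Cl A w))\<^sup>*"
  using assms(1,2)
proof (induction rule: rtrancl_induct)
  case base show ?case by simp
next
  case (step c b)
  have cw: "(c,w) \<in> (edges A)\<^sup>*" using step by (meson converse_rtrancl_into_rtrancl)
  have IH: "(a,c) \<in> (edges A \<inter> (Cl A w \<times> Cl A w))\<^sup>*" using step.IH cw .
  have wc: "(w,c) \<in> (edges A)\<^sup>*" using assms(3) step(1) by (rule rtrancl_trans)
  have wb: "(w,b) \<in> (edges A)\<^sup>*" using wc step(2) by (rule rtrancl_into_rtrancl)
  have "c \<in> Cl A w" "b \<in> Cl A w" unfolding Cl_def using edges_lt[OF step(2)] cw wc wb step(4) by auto
  with step(2) have "(c,b) \<in> edges A \<inter> (Cl A w \<times> Cl A w)" by auto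
  with IH show ?case by (rule rtrancl_into_rtrancl)
qed

lemma Cl_sub: "Cl A w \<subseteq> {0..<dim_row A}" unfolding Cl_def by auto

lemma Cl_mem: "w < dim_row A \<Longrightarrow> w \<in> Cl A w" unfolding Cl_def by auto

lemma Cl_sc: assumes w: "w < dim_row A" shows "strongly_connected_set A (Cl A w)"
  unfolding strongly_connected_set_def
proof (intro conjI ballI)
  show "Cl A w \<noteq> {}" using Cl_mem[OF w] by auto
  fix i j assume i: "i \<in> Cl A w" and j: "j \<in> Cl A w"
  have "(i,j) \<in> (edges A)\<^sup>*" using i j unfolding Cl_def by (auto intro: rtrancl_trans)
  moreover have "(j,w) \<in> (edges A)\<^sup>*" "(w,i) \<in> (edges A)\<^sup>*" using i j unfolding Cl_def by auto
  ultimately show "(i,j) \<in> (edges A \<inter> (Cl A w \<times> Cl A w))\<^sup>*" by (rule rtrancl_within)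
qed

lemma sc_sub_Cl: assumes sc: "strongly_connected_set A W" and W: "W \<subseteq> {0..<dim_row A}" and w: "w \<in> W"
  shows "W \<subseteq> Cl A w"
proof
  fix x assume x: "x \<in> W"
  have "(w,x) \<in> (edges A \<inter> (W \<times> W))\<^sup>*" "(x,w) \<in> (edges A \<inter> (W \<times> W))\<^sup>*"
    using sc x w unfolding strongly_connected_set_def by auto
  hence "(w,x) \<in> (edges A)\<^sup>*" "(x,w) \<in> (edges A)\<^sup>*" using rtrancl_mono[of "edges A \<inter> (W \<times> W)" "edges A"] by auto
  thus "x \<in> Cl A w" unfolding Cl_def using x W by auto
qed

lemma Cl_scc: assumes w: "w < dim_row A" shows "is_scc A (Cl A w)"
  unfolding is_scc_def
proof (intro conjI allI impI)
  show "Cl A w \<subseteq> {0..<dim_row A}" by (rule Cl_sub)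
  show "strongly_connected_set A (Cl A w)" by (rule Cl_sc[OF w])
  fix W' assume W': "Cl A w \<subseteq> W' \<and> W' \<subseteq> {0..<dim_row A} \<and> strongly_connected_set A W'"
  have "w \<in> W'" using W' Cl_mem[OF w] by auto
  hence "W' \<subseteq> Cl A w" using sc_sub_Cl W' by blast
  with W' show "W' = Cl A w" by auto
qed

lemma scc_eq: assumes W: "is_scc A W" and w: "w \<in> W" shows "W = Cl A w"
proof -
  have W1: "W \<subseteq> {0..<dim_row A}" "strongly_connected_set A W" using W unfolding is_scc_def by auto
  have sub: "W \<subseteq> Cl A w" by (rule sc_sub_Cl[OF W1(2) W1(1) w])
  have wl: "w < dim_row A" using W1 w by auto
  from W[unfolded is_scc_def] sub Cl_sub[of A w] Cl_sc[OF wl] show ?thesis by auto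
qed

lemma Cl_eq: assumes "j \<in> Cl A w" shows "Cl A j = Cl A w"
proof -
  have jl: "j < dim_row A" and jw: "(j,w) \<in> (edges A)\<^sup>*" using assms unfolding Cl_def by auto
  have w: "w < dim_row A" using jw
  proof (cases rule: rtranclE)
    case base thus ?thesis using jl by simp
  next
    case (step y) thus ?thesis using edges_lt[OF step(2)] by simp
  qed
  show ?thesis using scc_eq[OF Cl_scc[OF w] assms] by simp
qed

lemma scc_inter: "is_scc A V \<Longrightarrow> is_scc A W \<Longrightarrow> x \<in> V \<Longrightarrow> x \<in> W \<Longrightarrow> V = W"
  using scc_eq[of A V x] scc_eq[of A W x] by simp

lemma propagate: assumes step: "\<And>l j. l \<in> V \<Longrightarrow> P l \<Longrightarrow> (l,j) \<in> edges A \<Longrightarrow> j \<in> V \<Longrightarrow> P j"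
  and p: "(l0,l) \<in> (edges A \<inter> (V \<times> V))\<^sup>*" and P0: "P l0" and l0: "l0 \<in> V"
  shows "P l"
  using p
proof (induction rule: rtrancl_induct)
  case base show ?case by (rule P0)
next
  case (step y z)
  have "y \<in> V" using step(1) l0 by (cases rule: rtranclE) auto
  with step show ?case using assms(1) by blast
qed

lemma sink_edge: assumes V: "is_scc A V" and sink: "is_sink A V" and i: "i \<in> V" and e: "(i,j) \<in> edges A"
  shows "j \<in> V"
proof (rule ccontr)
  assume j: "j \<notin> V"
  have jl: "j < dim_row A" using edges_lt[OF e] by auto
  have "is_scc A (Cl A j)" by (rule Cl_scc[OF jl])
  moreover have "red_edge A V (Cl A j)" unfolding red_edge_def using Cl_mem[OF jl] j i e by auto
  ultimately show False using sink unfolding is_sink_def by auto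
qed

lemma source_edge: assumes V: "is_scc A V" and src: "is_source A V" and j: "j \<in> V" and e: "(i,j) \<in> edges A"
  shows "i \<in> V"
proof (rule ccontr)
  assume i: "i \<notin> V"
  have il: "i < dim_row A" using edges_lt[OF e] by auto
  have "is_scc A (Cl A i)" by (rule Cl_scc[OF il])
  moreover have "red_edge A (Cl A i) V" unfolding red_edge_def using Cl_mem[OF il] j i e by auto
  ultimately show False using src unfolding is_source_def by auto
qed

definition Anc :: "real mat \<Rightarrow> nat \<Rightarrow> nat set" where
  "Anc A j = {a. a < dim_row A \<and> (a,j) \<in> (edges A)\<^sup>*}"

lemma source_exists: assumes i: "i \<in> S" and S: "S \<subseteq> {0..<dim_row A}"
  and closed: "\<And>a b. (a,b) \<in> edges A \<Longrightarrow> b \<in> S \<Longrightarrow> a \<in> S"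
  shows "\<exists>V. is_scc A V \<and> is_source A V \<and> V \<subseteq> S"
proof -
  have ancS: "Anc A j \<subseteq> S" if "j \<in> S" for j
  proof
    fix a assume "a \<in> Anc A j"
    hence "(a,j) \<in> (edges A)\<^sup>*" unfolding Anc_def by auto
    thus "a \<in> S" using that
      by (induction rule: converse_rtrancl_induct) (auto intro: closed)
  qed
  have il: "i < dim_row A" using i S by auto
  have "i \<in> Anc A i" unfolding Anc_def using il by auto
  then obtain j where j: "j \<in> Anc A i" and jmin: "\<And>j'. j' \<in> Anc A i \<Longrightarrow> card (Anc A j) \<le> card (Anc A j')"
    using ex_has_least_nat[of "\<lambda>j. j \<in> Anc A i" i "\<lambda>j. card (Anc A j)"] by blast
  have jl: "j < dim_row A" and ji: "(j,i) \<in> (edges A)\<^sup>*" using j unfolding Anc_def by auto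
  have jS: "j \<in> S" using ancS[OF i] j by auto
  define V where "V = Cl A j"
  have Vscc: "is_scc A V" unfolding V_def by (rule Cl_scc[OF jl])
  have VS: "V \<subseteq> S"
  proof
    fix c assume "c \<in> V"
    hence "c \<in> Anc A j" unfolding V_def Cl_def Anc_def by auto
    thus "c \<in> S" using ancS[OF jS] by auto
  qed
  have finA: "finite (Anc A k)" for k unfolding Anc_def by auto
  have "is_source A V" unfolding is_source_def
  proof
    assume "\<exists>W. is_scc A W \<and> red_edge A W V"
    then obtain W w c where W: "is_scc A W" "W \<noteq> V" "w \<in> W" "c \<in> V" "(w,c) \<in> edges A"
      unfolding red_edge_def by auto
    have wl: "w < dim_row A" using edges_lt[OF W(5)] by auto
    have cj: "(c,j) \<in> (edges A)\<^sup>*" using W(4) unfolding V_def Cl_def by auto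
    have wj: "(w,j) \<in> (edges A)\<^sup>*" using W(5) cj by (rule converse_rtrancl_into_rtrancl)
    have sub: "Anc A w \<subseteq> Anc A j" unfolding Anc_def using wj by (auto intro: rtrancl_trans)
    have "w \<in> Anc A i" unfolding Anc_def using wl wj ji by (auto intro: rtrancl_trans)
    from jmin[OF this] have "card (Anc A j) \<le> card (Anc A w)" .
    hence "Anc A w = Anc A j" using sub finA card_seteq by blast
    moreover have "j \<in> Anc A j" unfolding Anc_def using jl by auto
    ultimately have "(j,w) \<in> (edges A)\<^sup>*" unfolding Anc_def by auto
    hence "w \<in> V" unfolding V_def Cl_def using wl wj by auto
    hence "W = V" using scc_inter[OF W(1) Vscc W(3)] by auto
    with W(2) show False by auto
  qed
  with Vscc VS show ?thesis by blast
qed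




lemma Max_ereal: "finite S \<Longrightarrow> S \<noteq> {} \<Longrightarrow> Max ((\<lambda>i. ereal (f i)) ` S) = ereal (Max (f ` S))"
proof -
  assume fin: "finite S" and ne: "S \<noteq> {}"
  have "mono ereal" by (auto simp: mono_def)
  from mono_Max_commute[OF this, of "f ` S"] fin ne
  show ?thesis by (simp add: image_image)
qed

locale pfc =
  fixes A :: "real mat" and m :: nat
  assumes A: "A \<in> carrier_mat m m" and nn: "nonneg_mat A" and m: "m > 0"
begin

lemma Ann: "i < m \<Longrightarrow> j < m \<Longrightarrow> A $$ (i,j) \<ge> 0" using A nn unfolding nonneg_mat_def by auto

lemma dimA: "dim_row A = m" using A by auto

lemma edge_iff: "i < m \<Longrightarrow> j < m \<Longrightarrow> (i,j) \<in> edges A \<longleftrightarrow> A $$ (i,j) \<noteq> 0"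
  unfolding edges_def using dimA by auto

lemma L_supp: assumes y: "y \<in> carrier_vec m" and V: "V \<subseteq> {0..<m}" and z: "\<And>j. j < m \<Longrightarrow> j \<notin> V \<Longrightarrow> y $ j = 0"
  and i: "i < m"
  shows "(A *\<^sub>v y) $ i = (\<Sum>j\<in>V. A $$ (i,j) * y $ j)"
  unfolding mv_sum[OF A y i]
  by (rule sum.mono_neutral_right, insert V z, auto)

lemma Av_nonneg: assumes y: "y \<in> carrier_vec m" "\<And>j. j < m \<Longrightarrow> y $ j \<ge> 0" and i: "i < m"
  shows "(A *\<^sub>v y) $ i \<ge> 0"
  unfolding mv_sum[OF A y(1) i] by (rule sum_nonneg, rule mult_nonneg_nonneg, insert Ann i y(2), auto)

lemma L_tau: fixes x y :: "real vec" assumes V: "V \<subseteq> {0..<m}" and y: "y \<in> carrier_vec m" "\<And>j. j < m \<Longrightarrow> y $ j \<ge> 0"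
  "\<And>j. j < m \<Longrightarrow> j \<notin> V \<Longrightarrow> y $ j = 0" "i1 \<in> V" "y $ i1 \<noteq> 0"
  and x: "\<And>l. l \<in> V \<Longrightarrow> x $ l > 0" "\<And>l. l < m \<Longrightarrow> x $ l \<ge> 0"
  shows "\<exists>\<tau>>0. \<exists>l0\<in>V. y $ l0 > 0 \<and> x $ l0 = \<tau> * y $ l0 \<and> (\<forall>l<m. \<tau> * y $ l \<le> x $ l)"
proof -
  define T where "T = {l\<in>V. y $ l > 0}"
  have Vm: "\<And>l. l \<in> V \<Longrightarrow> l < m" using V by auto
  have "y $ i1 \<ge> 0" using y(2)[OF Vm[OF y(4)]] .
  hence "y $ i1 > 0" using y(5) by (simp add: less_le)
  hence i1T: "i1 \<in> T" unfolding T_def using y(4) by auto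
  have "T \<subseteq> {0..<m}" unfolding T_def using V by auto
  hence finT: "finite T" by (rule finite_subset) simp
  define f where "f l = x $ l / y $ l" for l
  define tau where "tau = Min (f ` T)"
  have "tau \<in> f ` T" unfolding tau_def using finT i1T by (intro Min_in) auto
  then obtain l0 where l0: "l0 \<in> T" "tau = f l0" by auto
  have le: "\<And>l. l \<in> T \<Longrightarrow> tau \<le> f l" unfolding tau_def using finT by auto
  have l0V: "l0 \<in> V" and yl0: "y $ l0 > 0" using l0 unfolding T_def by auto
  have taupos: "tau > 0" unfolding l0 f_def using x(1)[OF l0V] yl0 by auto
  have "x $ l0 = tau * y $ l0" unfolding l0 f_def using yl0 by auto
  moreover have "\<forall>l<m. tau * y $ l \<le> x $ l"
  proof (intro allI impI)
    fix l assume l: "l < m"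
    show "tau * y $ l \<le> x $ l"
    proof (cases "l \<in> T")
      case True
      hence "tau \<le> x $ l / y $ l" using le unfolding f_def by auto
      moreover have "y $ l > 0" using True unfolding T_def by auto
      ultimately show ?thesis by (simp add: le_divide_eq)
    next
      case False
      hence "y $ l = 0" unfolding T_def using y(2)[OF l] y(3)[OF l] by force
      thus ?thesis using x(2)[OF l] by simp
    qed
  qed
  ultimately show ?thesis using taupos l0V yl0 by blast
qed

lemma zero_step: assumes w: "w \<in> carrier_vec m" "\<And>j. j < m \<Longrightarrow> w $ j \<ge> 0" and l: "l < m"
  and le: "(A *\<^sub>v w) $ l \<le> c * w $ l" and wl: "w $ l = 0" and e: "(l,j) \<in> edges A"
  shows "w $ j = 0"
proof -
  have j: "j < m" using edges_lt[OF e] dimA by auto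
  have a: "A $$ (l,j) > 0" using e edge_iff[OF l j] Ann[OF l j] by auto
  have "(\<Sum>k<m. A $$ (l,k) * w $ k) \<le> 0" using le wl unfolding mv_sum[OF A w(1) l] by simp
  moreover have nn': "\<forall>k\<in>{..<m}. A $$ (l,k) * w $ k \<ge> 0" using Ann l w(2) by auto
  ultimately have "(\<Sum>k<m. A $$ (l,k) * w $ k) = 0" by (meson antisym sum_nonneg)
  hence "\<forall>k\<in>{..<m}. A $$ (l,k) * w $ k = 0" using nn' by (subst (asm) sum_nonneg_eq_0_iff) auto
  hence "A $$ (l,j) * w $ j = 0" using j by auto
  thus ?thesis using a by auto
qed

lemma r_pos: assumes x: "x \<in> carrier_vec m" "pos_vec x"
  shows "r_ratio A (1\<^sub>m m) x = ereal (MAX i\<in>{0..<m}. (A *\<^sub>v x) $ i / x $ i)"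
proof -
  have "r_ratio A (1\<^sub>m m) x = (MAX i\<in>{0..<m}. ereal ((A *\<^sub>v x) $ i / x $ i))"
    unfolding r_ratio_def dimA using x by (intro arg_cong[where f=Max] image_cong) (auto simp: quot_conv_def pos_vec_def)
  also have "\<dots> = ereal (MAX i\<in>{0..<m}. (A *\<^sub>v x) $ i / x $ i)" by (rule Max_ereal, insert m, auto)
  finally show ?thesis .
qed

lemma max_ratio_ge: assumes x: "x \<in> carrier_vec m" "pos_vec x"
  shows "sr A \<le> (MAX i\<in>{0..<m}. (A *\<^sub>v x) $ i / x $ i)"
proof (rule cw_upper[OF A nn m x])
  fix i assume i: "i < m"
  have "(A *\<^sub>v x) $ i / x $ i \<le> (MAX i\<in>{0..<m}. (A *\<^sub>v x) $ i / x $ i)" using i by auto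
  moreover have "x $ i > 0" using x i unfolding pos_vec_def by auto
  ultimately show "(A *\<^sub>v x) $ i \<le> (MAX i\<in>{0..<m}. (A *\<^sub>v x) $ i / x $ i) * x $ i"
    by (simp add: divide_le_eq)
qed

lemma part1a: "rho_pair A (1\<^sub>m m) = ereal (sr A)"
proof (rule antisym)
  let ?X = "{r_ratio A (1\<^sub>m m) x |x. x \<in> carrier_vec (dim_col A) \<and> pos_vec x}"
  show "ereal (sr A) \<le> rho_pair A (1\<^sub>m m)" unfolding rho_pair_def
  proof (rule Inf_greatest)
    fix r assume "r \<in> ?X"
    then obtain x where x: "x \<in> carrier_vec m" "pos_vec x" and r: "r = r_ratio A (1\<^sub>m m) x" using A by auto
    show "ereal (sr A) \<le> r" unfolding r r_pos[OF x] using max_ratio_ge[OF x] by simp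
  qed
  show "rho_pair A (1\<^sub>m m) \<le> ereal (sr A)"
  proof (rule ereal_le_epsilon2)
    fix e :: real assume e: "e > 0"
    define s where "s = sr A + e"
    have s: "s > sr A" using e unfolding s_def by auto
    have s0: "s > 0" using s sr_nonneg[OF A m] by auto
    from solve_shift[OF A s, of "vec m (\<lambda>_. 1)"] obtain x where x: "x \<in> carrier_vec m"
      and eq: "\<And>i. i < m \<Longrightarrow> s * x $ i - (A *\<^sub>v x) $ i = 1" by auto
    have x0: "\<And>i. i < m \<Longrightarrow> x $ i \<ge> 0"
    proof (rule nonneg_sol[OF A nn s x])
      fix i assume "i < m" thus "(A *\<^sub>v x) $ i \<le> s * x $ i" using eq[of i] by auto
    qed
    have Ax0: "\<And>i. i < m \<Longrightarrow> (A *\<^sub>v x) $ i \<ge> 0" by (rule Av_nonneg[OF x x0])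
    have xp: "\<And>i. i < m \<Longrightarrow> x $ i > 0"
    proof -
      fix i assume i: "i < m"
      have "s * x $ i > 0" using eq[OF i] Ax0[OF i] by linarith
      thus "x $ i > 0" using s0 by (simp add: zero_less_mult_iff)
    qed
    have px: "pos_vec x" unfolding pos_vec_def using xp x by auto
    have "(MAX i\<in>{0..<m}. (A *\<^sub>v x) $ i / x $ i) \<le> s"
    proof (subst Max_le_iff, insert m, auto)
      fix i assume i: "i < m"
      have "(A *\<^sub>v x) $ i \<le> s * x $ i" using eq[OF i] by linarith
      thus "(A *\<^sub>v x) $ i / x $ i \<le> s" using xp[OF i] by (simp add: divide_le_eq)
    qed
    hence "r_ratio A (1\<^sub>m m) x \<le> ereal (sr A) + ereal e" unfolding r_pos[OF x px] s_def by simp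
    moreover have "rho_pair A (1\<^sub>m m) \<le> r_ratio A (1\<^sub>m m) x" unfolding rho_pair_def
      by (rule Inf_lower, insert x px A, auto)
    ultimately show "rho_pair A (1\<^sub>m m) \<le> ereal (sr A) + ereal e" by simp
  qed
qed

lemma part3_mult: assumes irr: "irreducible_mat A"
  and y: "y \<in> carrier_vec m" "nonneg_vec y" "y \<noteq> 0\<^sub>v m" "A *\<^sub>v y = sr A \<cdot>\<^sub>v y"
  and x: "x \<in> carrier_vec m" "pos_vec x" and le: "\<And>i. i < m \<Longrightarrow> (A *\<^sub>v x) $ i \<le> sr A * x $ i"
  shows "\<exists>\<tau>. x = \<tau> \<cdot>\<^sub>v y"
proof -
  obtain i1 where i1: "i1 < m" "y $ i1 \<noteq> 0" using y by (metis eq_vecI carrier_vecD index_zero_vec)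
  have y0: "\<And>j. j < m \<Longrightarrow> y $ j \<ge> 0" using y unfolding nonneg_vec_def by auto
  have xp: "\<And>j. j < m \<Longrightarrow> x $ j > 0" using x unfolding pos_vec_def by auto
  from L_tau[of "{0..<m}" y i1 x] y(1) y0 i1 xp obtain tau l0 where tau: "tau > 0" "l0 < m" "y $ l0 > 0"
    "x $ l0 = tau * y $ l0" "\<And>l. l < m \<Longrightarrow> tau * y $ l \<le> x $ l" by (auto simp: less_imp_le)
  define w where "w = x - tau \<cdot>\<^sub>v y"
  have w: "w \<in> carrier_vec m" unfolding w_def using x y by auto
  have wi: "\<And>l. l < m \<Longrightarrow> w $ l = x $ l - tau * y $ l" unfolding w_def using x y by auto
  have w0: "w $ l \<ge> 0" if l: "l < m" for l using wi[OF l] tau(5)[OF l] by linarith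
  have Aw: "\<And>l. l < m \<Longrightarrow> (A *\<^sub>v w) $ l \<le> sr A * w $ l"
  proof -
    fix l assume l: "l < m"
    have "(A *\<^sub>v w) $ l = (A *\<^sub>v x) $ l - tau * (A *\<^sub>v y) $ l"
      unfolding w_def using A x y l by (simp add: mult_minus_distrib_mat_vec mult_mat_vec)
    also have "\<dots> = (A *\<^sub>v x) $ l - tau * (sr A * y $ l)" using y(4) l y(1) by simp
    also have "\<dots> \<le> sr A * x $ l - tau * (sr A * y $ l)" using le[OF l] by simp
    also have "\<dots> = sr A * w $ l" unfolding wi[OF l] by (simp add: algebra_simps)
    finally show "(A *\<^sub>v w) $ l \<le> sr A * w $ l" .
  qed
  have wz: "w $ l = 0" if l: "l < m" for l
  proof -
    have sc: "\<forall>i\<in>{0..<m}. \<forall>j\<in>{0..<m}. (i,j) \<in> (edges A \<inter> ({0..<m} \<times> {0..<m}))\<^sup>*"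
      using irr unfolding irreducible_mat_def strongly_connected_set_def dimA by blast
    have l0': "l0 \<in> {0..<m}" "l \<in> {0..<m}" using l tau(2) by auto
    have p: "(l0, l) \<in> (edges A \<inter> ({0..<m} \<times> {0..<m}))\<^sup>*"
      using sc l0' by simp
    have w0l: "w $ l0 = 0" using wi[OF tau(2)] tau(4) by simp
    have st: "w $ b = 0" if "a \<in> {0..<m}" "w $ a = 0" "(a,b) \<in> edges A" "b \<in> {0..<m}" for a b
    proof -
      have a: "a < m" using that(1) by simp
      show ?thesis by (rule zero_step[OF w w0 a Aw[OF a] that(2) that(3)])
    qed
    show ?thesis by (rule propagate[of "{0..<m}" "\<lambda>l. w $ l = 0", OF st p w0l], insert tau(2), auto)
  qed
  have "x = tau \<cdot>\<^sub>v y"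
  proof (rule eq_vecI)
    fix i assume "i < dim_vec (tau \<cdot>\<^sub>v y)" hence i: "i < m" using y by auto
    show "x $ i = (tau \<cdot>\<^sub>v y) $ i" using wi[OF i] wz[OF i] i y by auto
  qed (insert x y, auto)
  thus ?thesis by blast
qed

lemma part3: assumes irr: "irreducible_mat A"
  shows "\<exists>\<^sub>\<le>\<^sub>1 x. x \<in> carrier_vec m \<and> pos_vec x \<and> (\<Sum>i<m. x $ i) = 1 \<and>
          sr A = (MAX i\<in>{0..<m}. (A *\<^sub>v x) $ i / x $ i)"
proof (rule Uniq_I)
  from pf_eig[OF A nn m] obtain y where y: "y \<in> carrier_vec m" "nonneg_vec y" "y \<noteq> 0\<^sub>v m" "A *\<^sub>v y = sr A \<cdot>\<^sub>v y"
    by auto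
  have one: "\<exists>\<tau>. x = \<tau> \<cdot>\<^sub>v y \<and> \<tau> * (\<Sum>i<m. y $ i) = 1"
    if x: "x \<in> carrier_vec m \<and> pos_vec x \<and> (\<Sum>i<m. x $ i) = 1 \<and> sr A = (MAX i\<in>{0..<m}. (A *\<^sub>v x) $ i / x $ i)" for x
  proof -
    have le: "(A *\<^sub>v x) $ i \<le> sr A * x $ i" if i: "i < m" for i
    proof -
      have "(A *\<^sub>v x) $ i / x $ i \<le> sr A" using x i by auto
      moreover have "x $ i > 0" using x i unfolding pos_vec_def by auto
      ultimately show ?thesis by (simp add: divide_le_eq mult.commute)
    qed
    from part3_mult[OF irr y _ _ le] x obtain tau where xt: "x = tau \<cdot>\<^sub>v y" by auto
    have "(\<Sum>i<m. x $ i) = tau * (\<Sum>i<m. y $ i)" unfolding xt sum_distrib_left using y by auto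
    with x xt show ?thesis by auto
  qed
  fix x x' assume x: "x \<in> carrier_vec m \<and> pos_vec x \<and> (\<Sum>i<m. x $ i) = 1 \<and> sr A = (MAX i\<in>{0..<m}. (A *\<^sub>v x) $ i / x $ i)"
    and x': "x' \<in> carrier_vec m \<and> pos_vec x' \<and> (\<Sum>i<m. x' $ i) = 1 \<and> sr A = (MAX i\<in>{0..<m}. (A *\<^sub>v x') $ i / x' $ i)"
  from one[OF x] one[OF x'] obtain t t' where "x = t \<cdot>\<^sub>v y" "t * (\<Sum>i<m. y $ i) = 1"
    "x' = t' \<cdot>\<^sub>v y" "t' * (\<Sum>i<m. y $ i) = 1" by auto
  moreover from this have "t = t'"
  proof -
    assume a: "t * (\<Sum>i<m. y $ i) = 1" "t' * (\<Sum>i<m. y $ i) = 1"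
    hence nz: "(\<Sum>i<m. y $ i) \<noteq> 0" by auto
    from a have "t * (\<Sum>i<m. y $ i) = t' * (\<Sum>i<m. y $ i)" by simp
    thus "t = t'" using nz by simp
  qed
  ultimately show "x = x'" by simp
qed

end




context pfc begin

lemma scc_sub: "is_scc A V \<Longrightarrow> V \<subseteq> {0..<m}" unfolding is_scc_def using dimA by auto
lemma scc_ne: "is_scc A V \<Longrightarrow> V \<noteq> {}" unfolding is_scc_def strongly_connected_set_def by auto

lemma sub_le_full: assumes V: "V \<subseteq> {0..<m}" "V \<noteq> {}"
  shows "sr (principal_submat A V) \<le> sr A"
proof -
  from sub_eig[OF A nn V] obtain y where y: "y \<in> carrier_vec m" "nonneg_vec y"
    "\<forall>i<m. i \<notin> V \<longrightarrow> y $ i = 0" "\<exists>i\<in>V. y $ i \<noteq> 0"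
    "\<forall>i\<in>V. (\<Sum>j\<in>V. A $$ (i,j) * y $ j) = sr (principal_submat A V) * y $ i" by blast
  have ynz: "y \<noteq> 0\<^sub>v m"
  proof
    assume "y = 0\<^sub>v m"
    moreover obtain i where "i \<in> V" "y $ i \<noteq> 0" using y(4) by blast
    ultimately show False using V by auto
  qed
  have y0: "\<And>j. j < m \<Longrightarrow> y $ j \<ge> 0" using y(1,2) unfolding nonneg_vec_def by auto
  show ?thesis
  proof (rule cw_lower[OF A nn y(1,2) ynz])
    fix i assume i: "i < m"
    have Ay: "(A *\<^sub>v y) $ i = (\<Sum>j\<in>V. A $$ (i,j) * y $ j)" by (rule L_supp[OF y(1) V(1) _ i], insert y(3), auto)
    show "sr (principal_submat A V) * y $ i \<le> (A *\<^sub>v y) $ i"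
    proof (cases "i \<in> V")
      case True thus ?thesis using Ay y(5) by simp
    next
      case False
      hence "y $ i = 0" using y(3) i by auto
      thus ?thesis using Av_nonneg[OF y(1) y0 i] by simp
    qed
  qed
qed

lemma part2_fwd: assumes x: "x \<in> carrier_vec m" "pos_vec x" and eq: "sr A = (MAX i\<in>{0..<m}. (A *\<^sub>v x) $ i / x $ i)"
  and V: "is_scc A V" and Vr: "sr (principal_submat A V) = sr A"
  shows "is_sink A V"
proof (rule ccontr)
  assume "\<not> is_sink A V"
  then obtain W i j where W: "is_scc A W" "V \<noteq> W" "i \<in> V" "j \<in> W" "(i,j) \<in> edges A"
    unfolding is_sink_def red_edge_def by blast
  have Vsub: "V \<subseteq> {0..<m}" and Vne: "V \<noteq> {}" using scc_sub[OF V] scc_ne[OF V] by auto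
  have jV: "j \<notin> V" using scc_inter[OF V W(1) _ W(4)] W(2) by auto
  have jm: "j < m" and im: "i < m" using edges_lt[OF W(5)] dimA by auto
  have xp: "\<And>l. l < m \<Longrightarrow> x $ l > 0" using x unfolding pos_vec_def by auto
  have le: "(A *\<^sub>v x) $ l \<le> sr A * x $ l" if l: "l < m" for l
  proof -
    have "(A *\<^sub>v x) $ l / x $ l \<le> sr A" unfolding eq using l by auto
    thus ?thesis using xp[OF l] by (simp add: divide_le_eq mult.commute)
  qed
  from sub_eig[OF A nn Vsub Vne] obtain y where y: "y \<in> carrier_vec m" "nonneg_vec y"
    "\<forall>i<m. i \<notin> V \<longrightarrow> y $ i = 0" "\<exists>i\<in>V. y $ i \<noteq> 0"
    "\<forall>i\<in>V. (\<Sum>j\<in>V. A $$ (i,j) * y $ j) = sr (principal_submat A V) * y $ i" by blast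
  obtain i1 where i1: "i1 \<in> V" "y $ i1 \<noteq> 0" using y(4) by blast
  have y0: "\<And>j. j < m \<Longrightarrow> y $ j \<ge> 0" using y(1,2) unfolding nonneg_vec_def by auto
  have yoff: "\<And>j. j < m \<Longrightarrow> j \<notin> V \<Longrightarrow> y $ j = 0" using y(3) by auto
  have Vm: "\<And>l. l \<in> V \<Longrightarrow> l < m" using Vsub by auto
  from L_tau[OF Vsub y(1) y0 yoff i1, of x] xp Vm obtain tau l0 where tau: "tau > 0" "l0 \<in> V" "y $ l0 > 0"
    "x $ l0 = tau * y $ l0" "\<And>l. l < m \<Longrightarrow> tau * y $ l \<le> x $ l" by (auto simp: less_imp_le)
  define w where "w = x - tau \<cdot>\<^sub>v y"
  have w: "w \<in> carrier_vec m" unfolding w_def using x y by auto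
  have wi: "\<And>l. l < m \<Longrightarrow> w $ l = x $ l - tau * y $ l" unfolding w_def using x y by auto
  have w0: "w $ l \<ge> 0" if l: "l < m" for l using wi[OF l] tau(5)[OF l] by linarith
  have Aw: "(A *\<^sub>v w) $ l \<le> sr A * w $ l" if l: "l \<in> V" for l
  proof -
    have lm: "l < m" by (rule Vm[OF l])
    have Ay: "(A *\<^sub>v y) $ l = sr A * y $ l"
      using L_supp[OF y(1) Vsub yoff lm] y(5) l Vr by simp
    have "(A *\<^sub>v w) $ l = (A *\<^sub>v x) $ l - tau * (A *\<^sub>v y) $ l"
      unfolding w_def using A x y lm by (simp add: mult_minus_distrib_mat_vec mult_mat_vec)
    also have "\<dots> = (A *\<^sub>v x) $ l - tau * (sr A * y $ l)" unfolding Ay ..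
    also have "\<dots> \<le> sr A * x $ l - tau * (sr A * y $ l)" using le[OF lm] by simp
    also have "\<dots> = sr A * w $ l" unfolding wi[OF lm] by (simp add: algebra_simps)
    finally show ?thesis .
  qed
  have sc: "\<forall>a\<in>V. \<forall>b\<in>V. (a,b) \<in> (edges A \<inter> (V \<times> V))\<^sup>*"
    using V unfolding is_scc_def strongly_connected_set_def by blast
  have p: "(l0, i) \<in> (edges A \<inter> (V \<times> V))\<^sup>*" using sc tau(2) W(3) by simp
  have w0l: "w $ l0 = 0" using wi[OF Vm[OF tau(2)]] tau(4) by simp
  have st: "w $ b = 0" if "a \<in> V" "w $ a = 0" "(a,b) \<in> edges A" "b \<in> V" for a b
    by (rule zero_step[OF w w0 Vm[OF that(1)] Aw[OF that(1)] that(2) that(3)])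
  have wi0: "w $ i = 0" by (rule propagate[of V "\<lambda>l. w $ l = 0", OF st p w0l tau(2)])
  have "w $ j = 0" by (rule zero_step[OF w w0 im Aw[OF W(3)] wi0 W(5)])
  moreover have "w $ j = x $ j" using wi[OF jm] yoff[OF jm jV] by simp
  ultimately show False using xp[OF jm] by simp
qed

lemma nonbasic_lt: assumes N: "N = {i. i < m \<and> sr (principal_submat A (Cl A i)) \<noteq> sr A}" and Nne: "N \<noteq> {}"
  shows "sr (principal_submat A N) < sr A"
proof (rule ccontr)
  assume "\<not> ?thesis"
  hence ge: "sr A \<le> sr (principal_submat A N)" by simp
  have Nsub: "N \<subseteq> {0..<m}" unfolding N by auto
  have finN: "finite N" using Nsub finite_subset by blast
  from sub_eig[OF A nn Nsub Nne] obtain z where z: "z \<in> carrier_vec m" "nonneg_vec z"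
    "\<forall>i<m. i \<notin> N \<longrightarrow> z $ i = 0" "\<exists>i\<in>N. z $ i \<noteq> 0"
    "\<forall>i\<in>N. (\<Sum>j\<in>N. A $$ (i,j) * z $ j) = sr (principal_submat A N) * z $ i" by blast
  have z0: "\<And>j. j < m \<Longrightarrow> z $ j \<ge> 0" using z(1,2) unfolding nonneg_vec_def by auto
  define T where "T = {i\<in>N. z $ i > 0}"
  obtain i1 where i1: "i1 \<in> N" "z $ i1 \<noteq> 0" using z(4) by blast
  have "z $ i1 \<ge> 0" using z0 i1(1) Nsub by auto
  hence i1T: "i1 \<in> T" unfolding T_def using i1 by (simp add: less_le)
  define D where "D i = {j. j < m \<and> (i,j) \<in> (edges A)\<^sup>*} \<inter> T" for i
  have finD: "finite (D i)" for i unfolding D_def by auto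
  obtain i where iT: "i \<in> T" and imin: "\<And>j. j \<in> T \<Longrightarrow> card (D i) \<le> card (D j)"
    using ex_has_least_nat[of "\<lambda>j. j \<in> T" i1 "\<lambda>j. card (D j)"] i1T by blast
  have iN: "i \<in> N" and zi: "z $ i > 0" using iT unfolding T_def by auto
  have im: "i < m" using iN unfolding N by auto
  define C where "C = Cl A i"
  have Cscc: "is_scc A C" unfolding C_def using Cl_scc[of i A] im dimA by simp
  have iC: "i \<in> C" unfolding C_def using Cl_mem[of i A] im dimA by simp
  have CN: "C \<subseteq> N"
  proof
    fix c assume c: "c \<in> C"
    have cm: "c < m" using c unfolding C_def Cl_def dimA by auto
    have "Cl A c = C" unfolding C_def using Cl_eq c unfolding C_def by blast
    thus "c \<in> N" using iN cm unfolding N C_def by auto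
  qed
  have Csub: "C \<subseteq> {0..<m}" using CN Nsub by auto
  have Cne: "C \<noteq> {}" using iC by auto
  have sumC: "(\<Sum>j\<in>N. A $$ (k,j) * z $ j) = (\<Sum>j\<in>C. A $$ (k,j) * z $ j)" if k: "k \<in> C" for k
  proof (rule sum.mono_neutral_right[OF finN CN], rule ballI)
    fix j assume j: "j \<in> N - C"
    show "A $$ (k,j) * z $ j = 0"
    proof (rule ccontr)
      assume nz: "A $$ (k,j) * z $ j \<noteq> 0"
      have jm: "j < m" and km: "k < m" using j k CN Nsub by auto
      have "z $ j \<noteq> 0" using nz by auto
      hence "z $ j > 0" using z0[OF jm] by (simp add: less_le)
      hence jT: "j \<in> T" unfolding T_def using j by auto
      have e: "(k,j) \<in> edges A" using nz edge_iff[OF km jm] by auto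
      have ik: "(i,k) \<in> (edges A)\<^sup>*" using k unfolding C_def Cl_def by auto
      have ij: "(i,j) \<in> (edges A)\<^sup>*" using ik e by (rule rtrancl_into_rtrancl)
      have sub: "D j \<subseteq> D i" unfolding D_def using ij by (auto intro: rtrancl_trans)
      have "card (D i) \<le> card (D j)" by (rule imin[OF jT])
      hence "D j = D i" using sub finD card_seteq by blast
      moreover have "i \<in> D i" unfolding D_def using im iT by auto
      ultimately have "(j,i) \<in> (edges A)\<^sup>*" unfolding D_def by auto
      hence "j \<in> C" unfolding C_def Cl_def dimA using jm ij by auto
      with j show False by auto
    qed
  qed
  have "sr A \<le> sr (principal_submat A C)"
  proof (rule sub_lower[OF A nn Csub Cne z(1) _ iC])
    show "\<And>i. i \<in> C \<Longrightarrow> 0 \<le> z $ i" using z0 Csub by auto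
    show "z $ i \<noteq> 0" using zi by simp
    fix k assume k: "k \<in> C"
    have "sr A * z $ k \<le> sr (principal_submat A N) * z $ k"
      using ge z0[of k] k Csub by (intro mult_right_mono) auto
    also have "\<dots> = (\<Sum>j\<in>N. A $$ (k,j) * z $ j)" using z(5) k CN by auto
    also have "\<dots> = (\<Sum>j\<in>C. A $$ (k,j) * z $ j)" by (rule sumC[OF k])
    finally show "sr A * z $ k \<le> (\<Sum>j\<in>C. A $$ (k,j) * z $ j)" .
  qed
  moreover have "sr (principal_submat A C) \<le> sr A" by (rule sub_le_full[OF Csub Cne])
  ultimately have "sr (principal_submat A (Cl A i)) = sr A" unfolding C_def by simp
  with iN show False unfolding N by auto
qed

end




context pfc begin

lemma basic_pos_eig: assumes V: "is_scc A V" "sr (principal_submat A V) = sr A"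
  shows "\<exists>y. y \<in> carrier_vec m \<and> (\<forall>j<m. y $ j \<ge> 0) \<and> (\<forall>j<m. j \<notin> V \<longrightarrow> y $ j = 0) \<and> (\<forall>j\<in>V. y $ j > 0) \<and>
     (\<forall>i\<in>V. (\<Sum>j\<in>V. A $$ (i,j) * y $ j) = sr A * y $ i)"
proof -
  have Vsub: "V \<subseteq> {0..<m}" and Vne: "V \<noteq> {}" using scc_sub[OF V(1)] scc_ne[OF V(1)] by auto
  have Vm: "\<And>l. l \<in> V \<Longrightarrow> l < m" using Vsub by auto
  from sub_eig[OF A nn Vsub Vne] obtain y where y: "y \<in> carrier_vec m" "nonneg_vec y"
    "\<forall>i<m. i \<notin> V \<longrightarrow> y $ i = 0" "\<exists>i\<in>V. y $ i \<noteq> 0"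
    "\<forall>i\<in>V. (\<Sum>j\<in>V. A $$ (i,j) * y $ j) = sr (principal_submat A V) * y $ i" by blast
  have y0: "\<And>j. j < m \<Longrightarrow> y $ j \<ge> 0" using y(1,2) unfolding nonneg_vec_def by auto
  have yoff: "\<And>j. j < m \<Longrightarrow> j \<notin> V \<Longrightarrow> y $ j = 0" using y(3) by auto
  have Ay: "(A *\<^sub>v y) $ l \<le> sr A * y $ l" if l: "l \<in> V" for l
    using L_supp[OF y(1) Vsub yoff Vm[OF l]] y(5) l V(2) by simp
  have pos: "\<forall>j\<in>V. y $ j > 0"
  proof (rule ccontr)
    assume "\<not> (\<forall>j\<in>V. y $ j > 0)"
    then obtain l where l: "l \<in> V" "\<not> y $ l > 0" by blast
    have yl: "y $ l = 0" using l y0[OF Vm[OF l(1)]] by simp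
    have sc: "\<forall>a\<in>V. \<forall>b\<in>V. (a,b) \<in> (edges A \<inter> (V \<times> V))\<^sup>*"
      using V(1) unfolding is_scc_def strongly_connected_set_def by blast
    have st: "y $ b = 0" if "a \<in> V" "y $ a = 0" "(a,b) \<in> edges A" "b \<in> V" for a b
      by (rule zero_step[OF y(1) y0 Vm[OF that(1)] Ay[OF that(1)] that(2) that(3)])
    have all0: "y $ k = 0" if k: "k \<in> V" for k
    proof -
      have p: "(l, k) \<in> (edges A \<inter> (V \<times> V))\<^sup>*" using sc l(1) k by simp
      show ?thesis by (rule propagate[of V "\<lambda>l. y $ l = 0", OF st p yl l(1)])
    qed
    from y(4) all0 show False by blast
  qed
  have "\<forall>i\<in>V. (\<Sum>j\<in>V. A $$ (i,j) * y $ j) = sr A * y $ i" using y(5) V(2) by simp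
  with y(1) y0 yoff pos show ?thesis by blast
qed

lemma part2_bwd: assumes H: "\<forall>V. is_scc A V \<and> sr (principal_submat A V) = sr A \<longrightarrow> is_sink A V"
  shows "\<exists>x. x \<in> carrier_vec m \<and> pos_vec x \<and> sr A = (MAX i\<in>{0..<m}. (A *\<^sub>v x) $ i / x $ i)"
proof -
  define basic where "basic V \<longleftrightarrow> is_scc A V \<and> sr (principal_submat A V) = sr A" for V
  define Q where "Q V y \<longleftrightarrow> (basic V \<longrightarrow> y \<in> carrier_vec m \<and> (\<forall>j<m. y $ j \<ge> 0) \<and> (\<forall>j<m. j \<notin> V \<longrightarrow> y $ j = 0) \<and> (\<forall>j\<in>V. y $ j > 0) \<and>
     (\<forall>i\<in>V. (\<Sum>j\<in>V. A $$ (i,j) * y $ j) = sr A * y $ i))" for V y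
  have "\<forall>V. \<exists>y. Q V y"
  proof
    fix V show "\<exists>y. Q V y"
    proof (cases "basic V")
      case True thus ?thesis unfolding Q_def using basic_pos_eig[of V] unfolding basic_def by blast
    next
      case False thus ?thesis unfolding Q_def by blast
    qed
  qed
  from choice[OF this] obtain Y where Y: "\<And>V. Q V (Y V)" by blast
  define N where "N = {i. i < m \<and> sr (principal_submat A (Cl A i)) \<noteq> sr A}"
  have Nsub: "N \<subseteq> {0..<m}" unfolding N_def by auto
  have finN: "finite N" using Nsub finite_subset by blast
  have basicCl: "basic (Cl A i)" if "i < m" "i \<notin> N" for i
    unfolding basic_def using Cl_scc[of i A] that dimA unfolding N_def by auto
  define xB where "xB i = Y (Cl A i) $ i" for i
  have YCl: "Y (Cl A i) \<in> carrier_vec m \<and> (\<forall>j<m. Y (Cl A i) $ j \<ge> 0) \<and> (\<forall>j<m. j \<notin> Cl A i \<longrightarrow> Y (Cl A i) $ j = 0) \<and>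
     (\<forall>j\<in>Cl A i. Y (Cl A i) $ j > 0) \<and> (\<forall>k\<in>Cl A i. (\<Sum>j\<in>Cl A i. A $$ (k,j) * Y (Cl A i) $ j) = sr A * Y (Cl A i) $ k)"
    if "i < m" "i \<notin> N" for i
    using Y[of "Cl A i"] basicCl[OF that] unfolding Q_def by blast
  have iCl: "i \<in> Cl A i" if "i < m" for i using Cl_mem[of i A] that dimA by simp
  have xBpos: "xB i > 0" if "i < m" "i \<notin> N" for i unfolding xB_def using YCl[OF that] iCl[OF that(1)] by blast
  define c where "c i = (\<Sum>j\<in>{..<m} - N. A $$ (i,j) * xB j) + 1" for i
  have cpos: "c i > 0" if "i \<in> N" for i
  proof -
    have im: "i < m" using that Nsub by auto
    have "(\<Sum>j\<in>{..<m} - N. A $$ (i,j) * xB j) \<ge> 0"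
    proof (rule sum_nonneg)
      fix j assume j: "j \<in> {..<m} - N"
      have "A $$ (i,j) \<ge> 0" using Ann[OF im] j by auto
      moreover have "xB j > 0" using xBpos j by auto
      ultimately show "A $$ (i,j) * xB j \<ge> 0" by simp
    qed
    thus ?thesis unfolding c_def by linarith
  qed
  obtain xN where xNpos: "\<forall>i\<in>N. xN i > 0" and xNeq: "\<forall>i\<in>N. sr A * xN i - (\<Sum>j\<in>N. A $$ (i,j) * xN j) = c i"
  proof (cases "N = {}")
    case True thus ?thesis using that[of "\<lambda>_. 1"] by simp
  next
    case False
    have lt: "sr (principal_submat A N) < sr A" by (rule nonbasic_lt[OF N_def False])
    from sub_solve[OF A nn Nsub False lt, of c] cpos show ?thesis using that by blast
  qed
  define x where "x = vec m (\<lambda>i. if i \<in> N then xN i else xB i)"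
  have xc: "x \<in> carrier_vec m" unfolding x_def by auto
  have xi: "\<And>i. i < m \<Longrightarrow> x $ i = (if i \<in> N then xN i else xB i)" unfolding x_def by auto
  have xp: "x $ i > 0" if i: "i < m" for i using xi[OF i] xNpos xBpos[OF i] by (cases "i \<in> N") auto
  have px: "pos_vec x" unfolding pos_vec_def using xp xc by auto
  have le: "(A *\<^sub>v x) $ i \<le> sr A * x $ i" if i: "i < m" for i
  proof (cases "i \<in> N")
    case True
    have sub: "N \<subseteq> {..<m}" using Nsub by auto
    have "(A *\<^sub>v x) $ i = (\<Sum>j<m. A $$ (i,j) * x $ j)" by (rule mv_sum[OF A xc i])
    also have "\<dots> = (\<Sum>j\<in>{..<m} - N. A $$ (i,j) * x $ j) + (\<Sum>j\<in>N. A $$ (i,j) * x $ j)"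
      by (rule sum.subset_diff[OF sub], simp)
    also have "(\<Sum>j\<in>{..<m} - N. A $$ (i,j) * x $ j) = (\<Sum>j\<in>{..<m} - N. A $$ (i,j) * xB j)"
      by (rule sum.cong, auto simp: xi)
    also have "(\<Sum>j\<in>N. A $$ (i,j) * x $ j) = (\<Sum>j\<in>N. A $$ (i,j) * xN j)"
      by (rule sum.cong, insert Nsub, auto simp: xi)
    also have "(\<Sum>j\<in>{..<m} - N. A $$ (i,j) * xB j) + (\<Sum>j\<in>N. A $$ (i,j) * xN j) = sr A * xN i - 1"
      using xNeq True unfolding c_def by force
    also have "\<dots> \<le> sr A * x $ i" using xi[OF i] True by simp
    finally show ?thesis .
  next
    case False
    define V where "V = Cl A i"
    have Vscc: "is_scc A V" using basicCl[OF i False] unfolding basic_def V_def by auto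
    have sink: "is_sink A V" using H basicCl[OF i False] unfolding basic_def V_def by auto
    have iV: "i \<in> V" unfolding V_def by (rule iCl[OF i])
    have Vsub: "V \<subseteq> {..<m}" unfolding V_def using Cl_sub[of A i] dimA by auto
    have YV: "\<forall>k\<in>V. (\<Sum>j\<in>V. A $$ (k,j) * Y V $ j) = sr A * Y V $ k"
      using YCl[OF i False] unfolding V_def by blast
    have xV: "x $ j = Y V $ j" if j: "j \<in> V" for j
    proof -
      have jm: "j < m" using j Vsub by auto
      have ClV: "Cl A j = V" unfolding V_def using Cl_eq j unfolding V_def by blast
      have "j \<notin> N" using ClV False i jm unfolding N_def V_def by auto
      thus ?thesis using xi[OF jm] ClV unfolding xB_def by simp
    qed
    have "(A *\<^sub>v x) $ i = (\<Sum>j<m. A $$ (i,j) * x $ j)" by (rule mv_sum[OF A xc i])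
    also have "\<dots> = (\<Sum>j\<in>V. A $$ (i,j) * x $ j)"
    proof (rule sum.mono_neutral_right[OF _ Vsub], simp, rule ballI)
      fix j assume j: "j \<in> {..<m} - V"
      have "A $$ (i,j) = 0"
      proof (rule ccontr)
        assume "A $$ (i,j) \<noteq> 0"
        hence "(i,j) \<in> edges A" using edge_iff[OF i] j by auto
        from sink_edge[OF Vscc sink iV this] j show False by auto
      qed
      thus "A $$ (i,j) * x $ j = 0" by simp
    qed
    also have "\<dots> = (\<Sum>j\<in>V. A $$ (i,j) * Y V $ j)" by (rule sum.cong, auto simp: xV)
    also have "\<dots> = sr A * Y V $ i" using YV iV by blast
    also have "\<dots> = sr A * x $ i" using xV[OF iV] by simp
    finally show ?thesis by simp
  qed
  have "(MAX i\<in>{0..<m}. (A *\<^sub>v x) $ i / x $ i) \<le> sr A"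
  proof (subst Max_le_iff, simp, use m in simp, rule ballI)
    fix i assume "i \<in> (\<lambda>i. (A *\<^sub>v x) $ i / x $ i) ` {0..<m}"
    then obtain j where j: "j < m" and i: "i = (A *\<^sub>v x) $ j / x $ j" by auto
    show "i \<le> sr A" unfolding i using le[OF j] xp[OF j] by (simp add: divide_le_eq mult.commute)
  qed
  moreover have "sr A \<le> (MAX i\<in>{0..<m}. (A *\<^sub>v x) $ i / x $ i)" by (rule max_ratio_ge[OF xc px])
  ultimately show ?thesis using xc px by (intro exI[of _ x]) auto
qed

end




context pfc begin

lemma r_ge_quot: assumes x: "x \<in> carrier_vec m" and i: "i < m"
  shows "quot_conv ((A *\<^sub>v x) $ i) (x $ i) \<le> r_ratio A (1\<^sub>m m) x"
proof -
  have "quot_conv ((A *\<^sub>v x) $ i) ((1\<^sub>m m *\<^sub>v x) $ i) \<le> r_ratio A (1\<^sub>m m) x"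
    unfolding r_ratio_def dimA using i by (intro Max_ge) auto
  thus ?thesis using x by simp
qed

lemma part4: "rho_hat_pair A (1\<^sub>m m) = ereal (Min {sr (principal_submat A V) | V. is_scc A V \<and> is_source A V}) \<and>
     (\<exists>w. w \<in> carrier_vec m \<and> nonneg_vec w \<and> w \<noteq> 0\<^sub>v m \<and>
          A *\<^sub>v w = real_of_ereal (rho_hat_pair A (1\<^sub>m m)) \<cdot>\<^sub>v w)"
proof -
  define SRC where "SRC = {V. is_scc A V \<and> is_source A V}"
  have setEq: "{sr (principal_submat A V) | V. is_scc A V \<and> is_source A V} = (\<lambda>V. sr (principal_submat A V)) ` SRC"
    unfolding SRC_def by auto
  have "SRC \<subseteq> Pow {0..<m}" unfolding SRC_def using scc_sub by auto
  hence finS: "finite SRC" by (rule finite_subset) simp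
  have "\<exists>V. is_scc A V \<and> is_source A V \<and> V \<subseteq> {0..<m}"
    by (rule source_exists[of 0 "{0..<m}"], insert m dimA edges_lt[of _ _ A], auto)
  hence neS: "SRC \<noteq> {}" unfolding SRC_def by auto
  define mu where "mu = Min ((\<lambda>V. sr (principal_submat A V)) ` SRC)"
  have "mu \<in> (\<lambda>V. sr (principal_submat A V)) ` SRC" unfolding mu_def using finS neS by (intro Min_in) auto
  then obtain V0 where V0: "V0 \<in> SRC" "sr (principal_submat A V0) = mu" by auto
  have mule: "mu \<le> sr (principal_submat A V)" if "V \<in> SRC" for V unfolding mu_def using finS that by auto
  have V0scc: "is_scc A V0" and V0src: "is_source A V0" using V0 unfolding SRC_def by auto
  have V0sub: "V0 \<subseteq> {0..<m}" and V0ne: "V0 \<noteq> {}" using scc_sub[OF V0scc] scc_ne[OF V0scc] by auto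
  have mu0: "mu \<ge> 0" unfolding V0(2)[symmetric]
    by (rule sr_nonneg[OF sub_carrier[OF A nn V0sub V0ne] card_pos[OF A nn V0sub V0ne]])
  have lower: "ereal mu \<le> r_ratio A (1\<^sub>m m) x"
    if x: "x \<in> carrier_vec m" "nonneg_vec x" "x \<noteq> 0\<^sub>v m" for x
  proof (cases "\<exists>a<m. x $ a = 0 \<and> (A *\<^sub>v x) $ a \<noteq> 0")
    case True
    then obtain a where a: "a < m" "x $ a = 0" "(A *\<^sub>v x) $ a \<noteq> 0" by auto
    have "quot_conv ((A *\<^sub>v x) $ a) (x $ a) = \<infinity>" using a unfolding quot_conv_def by simp
    with r_ge_quot[OF x(1) a(1)] show ?thesis by simp
  next
    case False
    have x0: "\<And>j. j < m \<Longrightarrow> x $ j \<ge> 0" using x unfolding nonneg_vec_def by auto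
    define S where "S = {i. i < m \<and> x $ i > 0}"
    obtain i0 where i0: "i0 < m" "x $ i0 \<noteq> 0" using x by (metis eq_vecI carrier_vecD index_zero_vec)
    have i0S: "i0 \<in> S" unfolding S_def using i0 x0[OF i0(1)] by (simp add: less_le)
    have closed: "a \<in> S" if e: "(a,b) \<in> edges A" and b: "b \<in> S" for a b
    proof -
      have am: "a < m" and bm: "b < m" using edges_lt[OF e] dimA by auto
      have ab: "A $$ (a,b) > 0" using e edge_iff[OF am bm] Ann[OF am bm] by auto
      have "A $$ (a,b) * x $ b \<le> (\<Sum>j<m. A $$ (a,j) * x $ j)"
        by (rule member_le_sum[of b "{..<m}" "\<lambda>j. A $$ (a,j) * x $ j"], insert bm Ann[OF am] x0, auto)
      moreover have "A $$ (a,b) * x $ b > 0" using ab b unfolding S_def by auto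
      ultimately have "(A *\<^sub>v x) $ a \<noteq> 0" unfolding mv_sum[OF A x(1) am] by auto
      hence "x $ a \<noteq> 0" using False am by auto
      thus ?thesis unfolding S_def using am x0[OF am] by (simp add: less_le)
    qed
    have Ssub: "S \<subseteq> {0..<dim_row A}" unfolding S_def dimA by auto
    have "\<exists>V. is_scc A V \<and> is_source A V \<and> V \<subseteq> S"
    proof (rule source_exists[OF i0S Ssub])
      fix a b assume "(a,b) \<in> edges A" "b \<in> S" thus "a \<in> S" by (rule closed)
    qed
    then obtain V where V: "is_scc A V" "is_source A V" "V \<subseteq> S" by auto
    have Vsub: "V \<subseteq> {0..<m}" and Vne: "V \<noteq> {}" using scc_sub[OF V(1)] scc_ne[OF V(1)] by auto
    from sub_eig[OF A nn Vsub Vne] obtain y where y: "y \<in> carrier_vec m" "nonneg_vec y"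
      "\<forall>i<m. i \<notin> V \<longrightarrow> y $ i = 0" "\<exists>i\<in>V. y $ i \<noteq> 0"
      "\<forall>i\<in>V. (\<Sum>j\<in>V. A $$ (i,j) * y $ j) = sr (principal_submat A V) * y $ i" by blast
    obtain i1 where i1: "i1 \<in> V" "y $ i1 \<noteq> 0" using y(4) by blast
    have y0: "\<And>j. j < m \<Longrightarrow> y $ j \<ge> 0" using y(1,2) unfolding nonneg_vec_def by auto
    have yoff: "\<And>j. j < m \<Longrightarrow> j \<notin> V \<Longrightarrow> y $ j = 0" using y(3) by auto
    have xV: "\<And>l. l \<in> V \<Longrightarrow> x $ l > 0" using V(3) unfolding S_def by auto
    from L_tau[OF Vsub y(1) y0 yoff i1 xV x0] obtain tau l0 where tau: "tau > 0" "l0 \<in> V" "y $ l0 > 0"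
      "x $ l0 = tau * y $ l0" "\<And>l. l < m \<Longrightarrow> tau * y $ l \<le> x $ l" by blast
    have l0m: "l0 < m" using tau(2) Vsub by auto
    have "sr (principal_submat A V) * x $ l0 = tau * (\<Sum>j\<in>V. A $$ (l0,j) * y $ j)"
      using y(5) tau(2,4) by simp
    also have "\<dots> = (\<Sum>j\<in>V. A $$ (l0,j) * (tau * y $ j))" by (simp add: sum_distrib_left algebra_simps)
    also have "\<dots> \<le> (\<Sum>j\<in>V. A $$ (l0,j) * x $ j)"
      by (rule sum_mono, rule mult_left_mono, insert tau(5) Ann[OF l0m] Vsub, auto)
    also have "\<dots> \<le> (\<Sum>j<m. A $$ (l0,j) * x $ j)"
      by (rule sum_mono2, insert Vsub Ann[OF l0m] x0, auto)
    also have "\<dots> = (A *\<^sub>v x) $ l0" by (rule mv_sum[OF A x(1) l0m, symmetric])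
    finally have ge: "sr (principal_submat A V) * x $ l0 \<le> (A *\<^sub>v x) $ l0" .
    have xl0: "x $ l0 > 0" using xV[OF tau(2)] .
    have "mu \<le> sr (principal_submat A V)" by (rule mule, unfold SRC_def, insert V, auto)
    hence "mu * x $ l0 \<le> sr (principal_submat A V) * x $ l0" using xl0 by (intro mult_right_mono) auto
    hence "mu * x $ l0 \<le> (A *\<^sub>v x) $ l0" using ge by linarith
    hence "mu \<le> (A *\<^sub>v x) $ l0 / x $ l0" using xl0 by (simp add: le_divide_eq)
    moreover have "quot_conv ((A *\<^sub>v x) $ l0) (x $ l0) = ereal ((A *\<^sub>v x) $ l0 / x $ l0)"
      unfolding quot_conv_def using xl0 by simp
    ultimately show ?thesis using r_ge_quot[OF x(1) l0m] by (metis ereal_less_eq(3) order_trans)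
  qed
  from sub_eig[OF A nn V0sub V0ne] obtain y where y: "y \<in> carrier_vec m" "nonneg_vec y"
    "\<forall>i<m. i \<notin> V0 \<longrightarrow> y $ i = 0" "\<exists>i\<in>V0. y $ i \<noteq> 0"
    "\<forall>i\<in>V0. (\<Sum>j\<in>V0. A $$ (i,j) * y $ j) = sr (principal_submat A V0) * y $ i" by blast
  have yoff: "\<And>j. j < m \<Longrightarrow> j \<notin> V0 \<Longrightarrow> y $ j = 0" using y(3) by auto
  have ynz: "y \<noteq> 0\<^sub>v m"
  proof
    assume "y = 0\<^sub>v m"
    moreover obtain i where "i \<in> V0" "y $ i \<noteq> 0" using y(4) by blast
    ultimately show False using V0sub by auto
  qed
  have Ay: "A *\<^sub>v y = mu \<cdot>\<^sub>v y"
  proof (rule eq_vecI)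
    fix i assume "i < dim_vec (mu \<cdot>\<^sub>v y)" hence i: "i < m" using y by auto
    have s: "(A *\<^sub>v y) $ i = (\<Sum>j\<in>V0. A $$ (i,j) * y $ j)" by (rule L_supp[OF y(1) V0sub yoff i])
    show "(A *\<^sub>v y) $ i = (mu \<cdot>\<^sub>v y) $ i"
    proof (cases "i \<in> V0")
      case True thus ?thesis using s y(5) V0(2) i y(1) by simp
    next
      case False
      have "(\<Sum>j\<in>V0. A $$ (i,j) * y $ j) = 0"
      proof (rule sum.neutral, rule ballI)
        fix j assume j: "j \<in> V0"
        have jm: "j < m" using j V0sub by auto
        have "A $$ (i,j) = 0"
        proof (rule ccontr)
          assume "A $$ (i,j) \<noteq> 0"
          hence "(i,j) \<in> edges A" using edge_iff[OF i jm] by simp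
          from source_edge[OF V0scc V0src j this] False show False by simp
        qed
        thus "A $$ (i,j) * y $ j = 0" by simp
      qed
      thus ?thesis using s yoff[OF i False] i y(1) by simp
    qed
  qed (insert y A, auto)
  have ry: "r_ratio A (1\<^sub>m m) y \<le> ereal mu"
    unfolding r_ratio_def dimA
  proof (subst Max_le_iff, simp, use m in simp, rule ballI)
    fix r assume "r \<in> (\<lambda>i. quot_conv ((A *\<^sub>v y) $ i) ((1\<^sub>m m *\<^sub>v y) $ i)) ` {0..<m}"
    then obtain i where i: "i < m" and r: "r = quot_conv ((A *\<^sub>v y) $ i) (y $ i)" using y(1) by auto
    have Ayi: "(A *\<^sub>v y) $ i = mu * y $ i" using Ay i y(1) by simp
    show "r \<le> ereal mu"
      unfolding r Ayi quot_conv_def using mu0 by auto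
  qed
  have Xdef: "rho_hat_pair A (1\<^sub>m m) = Inf {r_ratio A (1\<^sub>m m) x |x. x \<in> carrier_vec m \<and> nonneg_vec x \<and> x \<noteq> 0\<^sub>v m}"
    unfolding rho_hat_pair_def using A by simp
  have "rho_hat_pair A (1\<^sub>m m) = ereal mu"
  proof (rule antisym)
    show "rho_hat_pair A (1\<^sub>m m) \<le> ereal mu"
    proof -
      have "rho_hat_pair A (1\<^sub>m m) \<le> r_ratio A (1\<^sub>m m) y" unfolding Xdef
        by (rule Inf_lower, insert y(1,2) ynz, auto)
      with ry show ?thesis by simp
    qed
    show "ereal mu \<le> rho_hat_pair A (1\<^sub>m m)" unfolding Xdef
      by (rule Inf_greatest, insert lower, auto)
  qed
  moreover have "mu = Min {sr (principal_submat A V) | V. is_scc A V \<and> is_source A V}"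
    unfolding setEq mu_def ..
  ultimately show ?thesis using y(1,2) ynz Ay by auto
qed

end


theorem theorem3p2:
  fixes A :: "real mat" and m :: nat
  assumes A: "A \<in> carrier_mat m m" and m: "m > 0" and nn: "nonneg_mat A"
  shows
    "(rho_pair A (1\<^sub>m m) = ereal (sr A) \<and>
     (\<exists>y. y \<in> carrier_vec m \<and> nonneg_vec y \<and> y \<noteq> 0\<^sub>v m \<and> A *\<^sub>v y = sr A \<cdot>\<^sub>v y)) \<and>
     ((\<exists>x. x \<in> carrier_vec m \<and> pos_vec x \<and>
          sr A = (MAX i\<in>{0..<m}. (A *\<^sub>v x) $ i / x $ i))
     \<longleftrightarrow> (\<forall>V. is_scc A V \<and> sr (principal_submat A V) = sr A \<longrightarrow> is_sink A V)) \<and>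
     (irreducible_mat A \<longrightarrow>
     (\<exists>\<^sub>\<le>\<^sub>1 x. x \<in> carrier_vec m \<and> pos_vec x \<and> (\<Sum>i<m. x $ i) = 1 \<and>
          sr A = (MAX i\<in>{0..<m}. (A *\<^sub>v x) $ i / x $ i))) \<and>
     (rho_hat_pair A (1\<^sub>m m) = ereal (Min {sr (principal_submat A V) | V. is_scc A V \<and> is_source A V}) \<and>
     (\<exists>w. w \<in> carrier_vec m \<and> nonneg_vec w \<and> w \<noteq> 0\<^sub>v m \<and>
          A *\<^sub>v w = real_of_ereal (rho_hat_pair A (1\<^sub>m m)) \<cdot>\<^sub>v w))"
proof -
  interpret pfc A m using A nn m by unfold_locales
  have p1: "rho_pair A (1\<^sub>m m) = ereal (sr A)" by (rule part1a)
  have p1b: "\<exists>y. y \<in> carrier_vec m \<and> nonneg_vec y \<and> y \<noteq> 0\<^sub>v m \<and> A *\<^sub>v y = sr A \<cdot>\<^sub>v y"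
    using pf_eig[OF A nn m] by blast
  have p2: "(\<exists>x. x \<in> carrier_vec m \<and> pos_vec x \<and>
          sr A = (MAX i\<in>{0..<m}. (A *\<^sub>v x) $ i / x $ i))
     \<longleftrightarrow> (\<forall>V. is_scc A V \<and> sr (principal_submat A V) = sr A \<longrightarrow> is_sink A V)"
  proof
    assume "\<exists>x. x \<in> carrier_vec m \<and> pos_vec x \<and> sr A = (MAX i\<in>{0..<m}. (A *\<^sub>v x) $ i / x $ i)"
    then obtain x where x: "x \<in> carrier_vec m" "pos_vec x" "sr A = (MAX i\<in>{0..<m}. (A *\<^sub>v x) $ i / x $ i)" by blast
    show "\<forall>V. is_scc A V \<and> sr (principal_submat A V) = sr A \<longrightarrow> is_sink A V"
      using part2_fwd[OF x] by blast
  next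
    assume "\<forall>V. is_scc A V \<and> sr (principal_submat A V) = sr A \<longrightarrow> is_sink A V"
    from part2_bwd[OF this] show "\<exists>x. x \<in> carrier_vec m \<and> pos_vec x \<and> sr A = (MAX i\<in>{0..<m}. (A *\<^sub>v x) $ i / x $ i)" .
  qed
  have p3: "irreducible_mat A \<longrightarrow>
     (\<exists>\<^sub>\<le>\<^sub>1 x. x \<in> carrier_vec m \<and> pos_vec x \<and> (\<Sum>i<m. x $ i) = 1 \<and>
          sr A = (MAX i\<in>{0..<m}. (A *\<^sub>v x) $ i / x $ i))"
    using part3 by blast
  show ?thesis using p1 p1b p2 p3 part4 by blast
qed

end
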